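(* Let $f\colon G_1\to G_2$ be a group homomorphism that is isometric for $\operatorname{scl}$. Then for every $\varphi_1\in\operatorname{Q}(G_1)$ there exists $\varphi_2\in\operatorname{Q}(G_2)$ with $D(\varphi_2)=D(\varphi_1)$ and $\varphi_2\circ f=\varphi_1$. In particular, pullback along $f$ induces a surjection $\operatorname{Q}(G_2)/\operatorname{Hom}(G_2)\to\operatorname{Q}(G_1)/\operatorname{Hom}(G_1)$.
   Context: A quasimorphism on $G$ is a function $\varphi\colon G\to\mathbb{R}$ with finite defect $D(\varphi)=\sup_{g,h}|\varphi(g)+\varphi(h)-\varphi(gh)|$; it is homogeneous if $\varphi(g^n)=n\varphi(g)$ for all $g$, $n\in\mathbb{Z}$. $\operatorname{Q}(G)$ is the space of homogeneous quasimorphisms and $\operatorname{Hom}(G)$ the subspace of homomorphisms $G\to\mathbb{R}$. Stable commutator length on chains: $\operatorname{C}_1(G)$ is the real vector space with basis $G$. For an integral chain $c=\sum_i g_i$, $\operatorname{cl}_G(c)$ is the minimal number of commutators whose product equals some $\prod_i t_ig_it_i^{-1}$ ($t_i\in G$), and $\operatorname{scl}_G(c)=\lim_{n\to\infty}\operatorname{cl}_G(\sum_i g_i^n)/n$; extended by homogeneity and continuity to real chains, with value $\infty$ off the boundaries. $\operatorname{C}_1^H(G)$ is the quotient of $\operatorname{C}_1(G)$ by the span of all $g^n-ng$ ($n\in\mathbb{Z}$) and $hgh^{-1}-g$; $\operatorname{scl}_G$ descends to it. A homomorphism $f\colon G_1\to G_2$ is isometric for $\operatorname{scl}$ if the induced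 map $\operatorname{C}_1^H(G_1)\to\operatorname{C}_1^H(G_2)$ preserves $\operatorname{scl}$, including infinite values. *)

theory Defs
  imports "HOL-Algebra.Group" "HOL-Library.Extended_Real"
begin

definition defect_set :: "('a, 'b) monoid_scheme \<Rightarrow> ('a \<Rightarrow> real) \<Rightarrow> real set" where
  "defect_set G \<phi> =
     {\<bar>\<phi> g + \<phi> h - \<phi> (g \<otimes>\<^bsub>G\<^esub> h)\<bar> | g h. g \<in> carrier G \<and> h \<in> carrier G}"

definition quasimorphism :: "('a, 'b) monoid_scheme \<Rightarrow> ('a \<Rightarrow> real) \<Rightarrow> bool" where
  "quasimorphism G \<phi> \<longleftrightarrow> bdd_above (defect_set G \<phi>)"

definition defect :: "('a, 'b) monoid_scheme \<Rightarrow> ('a \<Rightarrow> real) \<Rightarrow> real" where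
  "defect G \<phi> = Sup (defect_set G \<phi>)"

definition homogeneous :: "('a, 'b) monoid_scheme \<Rightarrow> ('a \<Rightarrow> real) \<Rightarrow> bool" where
  "homogeneous G \<phi> \<longleftrightarrow>
     (\<forall>g \<in> carrier G. \<forall>n::int. \<phi> (g [^]\<^bsub>G\<^esub> n) = of_int n * \<phi> g)"

definition Qm :: "('a, 'b) monoid_scheme \<Rightarrow> ('a \<Rightarrow> real) set" where
  "Qm G = {\<phi>. quasimorphism G \<phi> \<and> homogeneous G \<phi>}"

definition Homr :: "('a, 'b) monoid_scheme \<Rightarrow> ('a \<Rightarrow> real) set" where
  "Homr G = {\<phi>. \<forall>g \<in> carrier G. \<forall>h \<in> carrier G. \<phi> (g \<otimes>\<^bsub>G\<^esub> h) = \<phi> g + \<phi> h}"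

definition prodl :: "('a, 'b) monoid_scheme \<Rightarrow> 'a list \<Rightarrow> 'a" where
  "prodl G xs = foldr (\<lambda>x y. x \<otimes>\<^bsub>G\<^esub> y) xs \<one>\<^bsub>G\<^esub>"

definition commutator :: "('a, 'b) monoid_scheme \<Rightarrow> 'a \<Rightarrow> 'a \<Rightarrow> 'a" where
  "commutator G a b = a \<otimes>\<^bsub>G\<^esub> b \<otimes>\<^bsub>G\<^esub> inv\<^bsub>G\<^esub> a \<otimes>\<^bsub>G\<^esub> inv\<^bsub>G\<^esub> b"

text \<open>cl of the integral chain g_1 + ... + g_m (given as the list gs): the minimal number of
  commutators whose product equals some product of conjugates t_i g_i t_i^{-1};
  infinity if there is no such expression.\<close>
definition cl :: "('a, 'b) monoid_scheme \<Rightarrow> 'a list \<Rightarrow> enat" where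
  "cl G gs = Inf {enat (length abs) | abs ts.
      set abs \<subseteq> carrier G \<times> carrier G \<and> set ts \<subseteq> carrier G \<and> length ts = length gs \<and>
      prodl G (map (\<lambda>(a, b). commutator G a b) abs) =
      prodl G (map (\<lambda>(t, g). t \<otimes>\<^bsub>G\<^esub> g \<otimes>\<^bsub>G\<^esub> inv\<^bsub>G\<^esub> t) (zip ts gs))}"

text \<open>scl of the integral chain g_1 + ... + g_m: the limit of cl(g_1^n + ... + g_m^n)/n,
  taken as a lim inf (this is the limit along those n for which the chain is a boundary,
  and infinity when it is never one).\<close>
definition scl :: "('a, 'b) monoid_scheme \<Rightarrow> 'a list \<Rightarrow> ereal" where
  "scl G gs = Liminf sequentially
     (\<lambda>n::nat. ereal_of_enat (cl G (map (\<lambda>g. g [^]\<^bsub>G\<^esub> n) gs)) / ereal (real n))"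

text \<open>Stated on integral chains with positive coefficients; by homogeneity and the relation
  -g = g^{-1} in C_1^H this determines scl on all rational chains of C_1^H, and
  real chains are handled by continuity.\<close>
definition scl_isometric ::
  "('a, 'b) monoid_scheme \<Rightarrow> ('c, 'd) monoid_scheme \<Rightarrow> ('a \<Rightarrow> 'c) \<Rightarrow> bool" where
  "scl_isometric G1 G2 f \<longleftrightarrow>
     (\<forall>gs. set gs \<subseteq> carrier G1 \<longrightarrow> scl G2 (map f gs) = scl G1 gs)"

end

theory Submission
  imports Defs "HOL-Library.Multiset"
begin

definition vadd :: "('c \<Rightarrow> rat) \<Rightarrow> ('c \<Rightarrow> rat) \<Rightarrow> ('c \<Rightarrow> rat)" where
  "vadd a b = (\<lambda>y. a y + b y)"
definition vsc :: "rat \<Rightarrow> ('c \<Rightarrow> rat) \<Rightarrow> ('c \<Rightarrow> rat)" where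
  "vsc q a = (\<lambda>y. q * a y)"

definition hb_good where
  "hb_good P \<Gamma>0 \<Gamma> \<longleftrightarrow> \<Gamma>0 \<subseteq> \<Gamma> \<and>
     (\<forall>a x b y. (a,x) \<in> \<Gamma> \<longrightarrow> (b,y) \<in> \<Gamma> \<longrightarrow> (vadd a b, x + y) \<in> \<Gamma>) \<and>
     (\<forall>a x q. (a,x) \<in> \<Gamma> \<longrightarrow> (vsc q a, of_rat q * x) \<in> \<Gamma>) \<and>
     (\<forall>a x s. (a,x) \<in> \<Gamma> \<longrightarrow> P a s \<longrightarrow> x \<le> (s::real))"

lemma hb_functional:
  assumes g: "hb_good P \<Gamma>0 \<Gamma>" and P0: "P (\<lambda>_. 0) 0"
    and ax: "(a,x) \<in> \<Gamma>" and ay: "(a,y) \<in> \<Gamma>"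
  shows "x = y"
proof -
  have 1: "(vsc (-1) a, - y) \<in> \<Gamma>" using g ay unfolding hb_good_def
    by (metis mult_minus1 of_rat_1 of_rat_minus)
  have 2: "(vadd a (vsc (-1) a), x + - y) \<in> \<Gamma>" using g ax 1 unfolding hb_good_def by blast
  have 3: "vadd a (vsc (-1) a) = (\<lambda>_. 0)" by (auto simp: vadd_def vsc_def)
  have "x - y \<le> 0" using g 2 P0 unfolding 3 hb_good_def by fastforce
  moreover
  have 1: "(vsc (-1) a, - x) \<in> \<Gamma>" using g ax unfolding hb_good_def
    by (metis mult_minus1 of_rat_1 of_rat_minus)
  have 2: "(vadd a (vsc (-1) a), y + - x) \<in> \<Gamma>" using g ay 1 unfolding hb_good_def by blast
  have "y - x \<le> 0" using g 2 P0 unfolding 3 hb_good_def by fastforce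
  ultimately show ?thesis by simp
qed

lemma hahn_banach_rel:
  fixes P :: "('c \<Rightarrow> rat) \<Rightarrow> real \<Rightarrow> bool" and \<Gamma>0 :: "(('c \<Rightarrow> rat) \<times> real) set"
  assumes Padd: "\<And>a b r s. P a r \<Longrightarrow> P b s \<Longrightarrow> P (vadd a b) (r + s)"
    and Psc: "\<And>a r q. P a r \<Longrightarrow> q > 0 \<Longrightarrow> P (vsc q a) (of_rat q * r)"
    and Psym: "\<And>a r. P a r \<Longrightarrow> \<exists>s. P (vsc (-1) a) s"
    and P0: "P (\<lambda>_. 0) 0"
    and G0: "hb_good P \<Gamma>0 \<Gamma>0" and Z0: "((\<lambda>_. 0), 0) \<in> \<Gamma>0"
  shows "\<exists>\<Phi>. (\<forall>a b. \<Phi> (vadd a b) = \<Phi> a + \<Phi> b) \<and> (\<forall>q a. \<Phi> (vsc q a) = of_rat q * \<Phi> a)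
            \<and> (\<forall>a x. (a,x) \<in> \<Gamma>0 \<longrightarrow> \<Phi> a = x) \<and> (\<forall>a r. P a r \<longrightarrow> \<Phi> a \<le> r)"
proof -
  let ?A = "{\<Gamma>. hb_good P \<Gamma>0 \<Gamma>}"
  have "\<forall>C\<in>chains ?A. \<exists>U\<in>?A. \<forall>X\<in>C. X \<subseteq> U"
  proof
    fix C assume C: "C \<in> chains ?A"
    show "\<exists>U\<in>?A. \<forall>X\<in>C. X \<subseteq> U"
    proof (cases "C = {}")
      case True then show ?thesis using G0 by auto
    next
      case False
      have CA: "\<And>X. X \<in> C \<Longrightarrow> hb_good P \<Gamma>0 X" using chainsD2[OF C] by auto
      have cmp: "\<And>X Y. X \<in> C \<Longrightarrow> Y \<in> C \<Longrightarrow> X \<subseteq> Y \<or> Y \<subseteq> X" using chainsD[OF C] by blast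
      have "hb_good P \<Gamma>0 (\<Union>C)"
        unfolding hb_good_def
      proof (intro conjI allI impI)
        show "\<Gamma>0 \<subseteq> \<Union>C" using False CA unfolding hb_good_def by blast
      next
        fix a x b y assume "(a,x) \<in> \<Union>C" "(b,y) \<in> \<Union>C"
        then obtain X Y where X: "X \<in> C" "(a,x) \<in> X" and Y: "Y \<in> C" "(b,y) \<in> Y" by blast
        show "(vadd a b, x + y) \<in> \<Union>C"
        proof (cases "X \<subseteq> Y")
          case True then show ?thesis using CA[OF Y(1)] X Y unfolding hb_good_def by blast
        next
          case False then have "Y \<subseteq> X" using cmp X Y by blast
          then show ?thesis using CA[OF X(1)] X Y unfolding hb_good_def by blast
        qed
      next
        fix a x q assume "(a,x) \<in> \<Union>C"
        then show "(vsc q a, of_rat q * x) \<in> \<Union>C" using CA unfolding hb_good_def by blast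
      next
        fix a x s assume "(a,x) \<in> \<Union>C" "P a s"
        then show "x \<le> s" using CA unfolding hb_good_def by blast
      qed
      then show ?thesis by blast
    qed
  qed
  from Zorn_Lemma2[OF this] obtain M where MA: "hb_good P \<Gamma>0 M"
    and Mmax: "\<And>X. hb_good P \<Gamma>0 X \<Longrightarrow> M \<subseteq> X \<Longrightarrow> X = M" by blast
  have Madd: "\<And>a x b y. (a,x) \<in> M \<Longrightarrow> (b,y) \<in> M \<Longrightarrow> (vadd a b, x + y) \<in> M"
    and Msc: "\<And>a x q. (a,x) \<in> M \<Longrightarrow> (vsc q a, of_rat q * x) \<in> M"
    and Mdom: "\<And>a x s. (a,x) \<in> M \<Longrightarrow> P a s \<Longrightarrow> x \<le> s"
    and M0: "\<Gamma>0 \<subseteq> M"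
    using MA unfolding hb_good_def by blast+
  have tot: "\<exists>x. (v,x) \<in> M" for v
  proof (rule ccontr)
    assume nv: "\<not> (\<exists>x. (v,x) \<in> M)"
    define Lo where "Lo = {x - r | w x r. (w,x) \<in> M \<and> P (vadd w (vsc (-1) v)) r}"
    define Up where "Up = {r - x | w x r. (w,x) \<in> M \<and> P (vadd w v) r}"
    have LU: "l \<le> u" if lu: "l \<in> Lo" "u \<in> Up" for l u
    proof -
      obtain w1 x1 r1 where 1: "l = x1 - r1" "(w1,x1) \<in> M" "P (vadd w1 (vsc (-1) v)) r1"
        using lu(1) unfolding Lo_def by blast
      obtain w2 x2 r2 where 2: "u = r2 - x2" "(w2,x2) \<in> M" "P (vadd w2 v) r2"
        using lu(2) unfolding Up_def by blast
      have "P (vadd (vadd w1 (vsc (-1) v)) (vadd w2 v)) (r1 + r2)" using Padd 1 2 by blast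
      moreover have "vadd (vadd w1 (vsc (-1) v)) (vadd w2 v) = vadd w1 w2"
        by (auto simp: vadd_def vsc_def)
      ultimately have "x1 + x2 \<le> r1 + r2" using Mdom[OF Madd[OF 1(2) 2(2)]] by simp
      then show ?thesis using 1 2 by simp
    qed
    have LoUp: "Lo \<noteq> {} \<longleftrightarrow> Up \<noteq> {}"
    proof
      assume "Lo \<noteq> {}"
      then obtain w x r where 1: "(w,x) \<in> M" "P (vadd w (vsc (-1) v)) r" unfolding Lo_def by blast
      obtain s where "P (vsc (-1) (vadd w (vsc (-1) v))) s" using Psym 1 by blast
      moreover have "vsc (-1) (vadd w (vsc (-1) v)) = vadd (vsc (-1) w) v"
        by (auto simp: vadd_def vsc_def)
      moreover have "(vsc (-1) w, of_rat (-1) * x) \<in> M" using Msc 1 by blast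
      ultimately show "Up \<noteq> {}" unfolding Up_def by auto
    next
      assume "Up \<noteq> {}"
      then obtain w x r where 1: "(w,x) \<in> M" "P (vadd w v) r" unfolding Up_def by blast
      obtain s where "P (vsc (-1) (vadd w v)) s" using Psym 1 by blast
      moreover have "vsc (-1) (vadd w v) = vadd (vsc (-1) w) (vsc (-1) v)"
        by (auto simp: vadd_def vsc_def)
      moreover have "(vsc (-1) w, of_rat (-1) * x) \<in> M" using Msc 1 by blast
      ultimately show "Lo \<noteq> {}" unfolding Lo_def by auto
    qed
    define t where "t = (if Lo = {} then 0 else Sup Lo)"
    have tU: "t \<le> u" if "u \<in> Up" for u
    proof -
      have "Lo \<noteq> {}" using LoUp that by blast
      then show ?thesis unfolding t_def using LU that by (auto intro!: cSup_least)
    qed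
    have tL: "l \<le> t" if "l \<in> Lo" for l
    proof -
      have ne: "Lo \<noteq> {}" using that by blast
      then obtain u where "u \<in> Up" using LoUp by blast
      then have "bdd_above Lo" using LU by (auto simp: bdd_above_def)
      then show ?thesis unfolding t_def using ne that by (auto intro: cSup_upper)
    qed
    define M' where "M' = {(vadd w (vsc q v), x + of_rat q * t) | w x q. (w,x) \<in> M}"
    have vq0: "vadd w (vsc 0 v) = w" for w by (auto simp: vadd_def vsc_def)
    have MM': "M \<subseteq> M'" unfolding M'_def
    proof
      fix p assume "p \<in> M"
      then show "p \<in> {(vadd w (vsc q v), x + of_rat q * t) | w x q. (w,x) \<in> M}"
        by (cases p) (rule CollectI, rule exI[of _ "fst p"], rule exI[of _ "snd p"], rule exI[of _ 0], simp add: vq0)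
    qed
    have gM': "hb_good P \<Gamma>0 M'"
      unfolding hb_good_def
    proof (intro conjI allI impI)
      show "\<Gamma>0 \<subseteq> M'" using M0 MM' by blast
    next
      fix a x b y assume "(a,x) \<in> M'" "(b,y) \<in> M'"
      then obtain w1 x1 q1 w2 x2 q2 where 1: "a = vadd w1 (vsc q1 v)" "x = x1 + of_rat q1 * t" "(w1,x1) \<in> M"
        and 2: "b = vadd w2 (vsc q2 v)" "y = x2 + of_rat q2 * t" "(w2,x2) \<in> M"
        unfolding M'_def by blast
      have "vadd a b = vadd (vadd w1 w2) (vsc (q1+q2) v)" unfolding 1 2
        by (auto simp: vadd_def vsc_def algebra_simps)
      moreover have "x + y = (x1 + x2) + of_rat (q1+q2) * t" unfolding 1 2 by (simp add: algebra_simps of_rat_add)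
      ultimately show "(vadd a b, x + y) \<in> M'" unfolding M'_def using Madd[OF 1(3) 2(3)] by blast
    next
      fix a x q assume "(a,x) \<in> M'"
      then obtain w1 x1 q1 where 1: "a = vadd w1 (vsc q1 v)" "x = x1 + of_rat q1 * t" "(w1,x1) \<in> M"
        unfolding M'_def by blast
      have "vsc q a = vadd (vsc q w1) (vsc (q*q1) v)" unfolding 1
        by (auto simp: vadd_def vsc_def algebra_simps)
      moreover have "of_rat q * x = of_rat q * x1 + of_rat (q*q1) * t" unfolding 1 by (simp add: algebra_simps of_rat_mult)
      ultimately show "(vsc q a, of_rat q * x) \<in> M'" unfolding M'_def using Msc[OF 1(3)] by blast
    next
      fix a x s assume "(a,x) \<in> M'" and Pas: "P a s"
      then obtain w1 x1 q where 1: "a = vadd w1 (vsc q v)" "x = x1 + of_rat q * t" "(w1,x1) \<in> M"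
        unfolding M'_def by blast
      consider "q = 0" | "q > 0" | "q < 0" by linarith
      then show "x \<le> s"
      proof cases
        case 1 then show ?thesis using \<open>a = _\<close> \<open>x = _\<close> Mdom[OF \<open>(w1,x1) \<in> M\<close>] Pas vq0 by auto
      next
        case 2
        have "P (vsc (1/q) a) (of_rat (1/q) * s)" using Psc[OF Pas] 2 by simp
        moreover have "vsc (1/q) a = vadd (vsc (1/q) w1) v" using 2 unfolding 1
          by (auto simp: vadd_def vsc_def algebra_simps)
        moreover have "(vsc (1/q) w1, of_rat (1/q) * x1) \<in> M" using Msc 1 by blast
        ultimately have "of_rat (1/q) * s - of_rat (1/q) * x1 \<in> Up" unfolding Up_def by auto
        then have "t \<le> of_rat (1/q) * s - of_rat (1/q) * x1" by (rule tU)
        then have "of_rat q * t \<le> of_rat q * (of_rat (1/q) * s - of_rat (1/q) * x1)"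
          using 2 by (simp add: mult_left_mono)
        also have "\<dots> = s - x1" using 2 by (simp add: algebra_simps of_rat_divide)
        finally show ?thesis using 1 by simp
      next
        case 3
        define b where "b = - q"
        have b: "b > 0" using 3 b_def by simp
        have "P (vsc (1/b) a) (of_rat (1/b) * s)" using Psc[OF Pas] b by simp
        moreover have "vsc (1/b) a = vadd (vsc (1/b) w1) (vsc (-1) v)" using b unfolding 1 b_def
          by (auto simp: vadd_def vsc_def algebra_simps)
        moreover have "(vsc (1/b) w1, of_rat (1/b) * x1) \<in> M" using Msc 1 by blast
        ultimately have "of_rat (1/b) * x1 - of_rat (1/b) * s \<in> Lo" unfolding Lo_def by auto
        then have "of_rat (1/b) * x1 - of_rat (1/b) * s \<le> t" by (rule tL)
        then have "of_rat b * (of_rat (1/b) * x1 - of_rat (1/b) * s) \<le> of_rat b * t"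
          using b by (simp add: mult_left_mono)
        moreover have "of_rat b * (of_rat (1/b) * x1 - of_rat (1/b) * s) = x1 - s"
          using b by (simp add: algebra_simps of_rat_divide)
        ultimately show ?thesis using 1 b_def by (simp add: of_rat_minus)
      qed
    qed
    have "(vadd (\<lambda>_. 0) (vsc 1 v), 0 + of_rat 1 * t) \<in> M'"
    proof -
      have "((\<lambda>_. 0), 0) \<in> M" using Z0 M0 by blast
      then show ?thesis unfolding M'_def by blast
    qed
    moreover have "vadd (\<lambda>_. 0) (vsc 1 v) = v" by (auto simp: vadd_def vsc_def)
    ultimately have "(v, t) \<in> M'" by simp
    then have "M' \<noteq> M" using nv by blast
    then show False using Mmax[OF gM' MM'] by blast
  qed
  define \<Phi> where "\<Phi> a = (THE x. (a,x) \<in> M)" for a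
  have PhiM: "(a, \<Phi> a) \<in> M" for a
  proof -
    obtain x where x: "(a,x) \<in> M" using tot by blast
    have "(THE x. (a,x) \<in> M) = x" using hb_functional[OF MA P0] x by blast
    then show ?thesis using x unfolding \<Phi>_def by simp
  qed
  have PhiE: "(a,x) \<in> M \<Longrightarrow> \<Phi> a = x" for a x using hb_functional[OF MA P0] PhiM by blast
  show ?thesis
  proof (intro exI conjI allI impI)
    fix a b show "\<Phi> (vadd a b) = \<Phi> a + \<Phi> b" using PhiE Madd PhiM by blast
  next
    fix q a show "\<Phi> (vsc q a) = of_rat q * \<Phi> a" using PhiE Msc PhiM by blast
  next
    fix a x assume "(a,x) \<in> \<Gamma>0" then show "\<Phi> a = x" using PhiE M0 by blast
  next
    fix a r assume "P a r" then show "\<Phi> a \<le> r" using Mdom PhiM by blast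
  qed
qed

definition CM :: "('a, 'b) monoid_scheme \<Rightarrow> nat \<Rightarrow> 'a set" where
  "CM G K = {prodl G (map (\<lambda>(a, b). commutator G a b) abs) | abs.
      set abs \<subseteq> carrier G \<times> carrier G \<and> length abs = K}"

definition CP :: "('a, 'b) monoid_scheme \<Rightarrow> 'a list \<Rightarrow> 'a set" where
  "CP G gs = {prodl G (map (\<lambda>(t, g). t \<otimes>\<^bsub>G\<^esub> g \<otimes>\<^bsub>G\<^esub> inv\<^bsub>G\<^esub> t) (zip ts gs)) | ts.
      set ts \<subseteq> carrier G \<and> length ts = length gs}"

definition expr :: "('a, 'b) monoid_scheme \<Rightarrow> 'a list \<Rightarrow> nat \<Rightarrow> bool" where
  "expr G gs K \<longleftrightarrow> CM G K \<inter> CP G gs \<noteq> {}"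

lemma cl_expr: "cl G gs = Inf {enat K | K. expr G gs K}"
  unfolding cl_def expr_def CM_def CP_def
  by (rule arg_cong[where f=Inf]) blast

context group
begin

lemma prodl_Nil [simp]: "prodl G [] = \<one>" by (simp add: prodl_def)
lemma prodl_Cons [simp]: "prodl G (x # xs) = x \<otimes> prodl G xs" by (simp add: prodl_def)

lemma prodl_closed: "set xs \<subseteq> carrier G \<Longrightarrow> prodl G xs \<in> carrier G"
  by (induction xs) auto

lemma prodl_append: "set xs \<subseteq> carrier G \<Longrightarrow> set ys \<subseteq> carrier G \<Longrightarrow>
   prodl G (xs @ ys) = prodl G xs \<otimes> prodl G ys"
  by (induction xs) (auto simp: m_assoc prodl_closed)

lemma commutator_closed [simp]: "a \<in> carrier G \<Longrightarrow> b \<in> carrier G \<Longrightarrow> commutator G a b \<in> carrier G"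
  by (simp add: commutator_def)

lemma inv_cancel_1 [simp]: "u \<in> carrier G \<Longrightarrow> z \<in> carrier G \<Longrightarrow> u \<otimes> (inv u \<otimes> z) = z"
  by (simp add: m_assoc[symmetric])
lemma inv_cancel_2 [simp]: "u \<in> carrier G \<Longrightarrow> z \<in> carrier G \<Longrightarrow> inv u \<otimes> (u \<otimes> z) = z"
  by (simp add: m_assoc[symmetric])

lemma CM_0: "CM G 0 = {\<one>}" by (auto simp: CM_def)

lemma CM_Suc: "CM G (Suc K) = {commutator G a b \<otimes> z | a b z. a \<in> carrier G \<and> b \<in> carrier G \<and> z \<in> CM G K}"
proof safe
  fix x assume "x \<in> CM G (Suc K)"
  then obtain abs where "set abs \<subseteq> carrier G \<times> carrier G" "length abs = Suc K"
    "x = prodl G (map (\<lambda>(a, b). commutator G a b) abs)" unfolding CM_def by blast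
  then show "\<exists>a b z. x = commutator G a b \<otimes> z \<and> a \<in> carrier G \<and> b \<in> carrier G \<and> z \<in> CM G K"
    by (cases abs) (auto simp: CM_def)
next
  fix a b z assume "a \<in> carrier G" "b \<in> carrier G" "z \<in> CM G K"
  then obtain abs where "set abs \<subseteq> carrier G \<times> carrier G" "length abs = K"
    "z = prodl G (map (\<lambda>(a, b). commutator G a b) abs)" unfolding CM_def by blast
  then show "commutator G a b \<otimes> z \<in> CM G (Suc K)" unfolding CM_def
    using \<open>a \<in> carrier G\<close> \<open>b \<in> carrier G\<close>
    by (intro CollectI exI[of _ "(a,b) # abs"]) auto
qed

lemma CM_closed: "z \<in> CM G K \<Longrightarrow> z \<in> carrier G"
  by (induction K arbitrary: z) (auto simp: CM_0 CM_Suc)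

lemma CP_Nil: "CP G [] = {\<one>}" by (auto simp: CP_def)

lemma CP_Cons: "CP G (x # xs) = {t \<otimes> x \<otimes> inv t \<otimes> z | t z. t \<in> carrier G \<and> z \<in> CP G xs}"
proof safe
  fix w assume "w \<in> CP G (x # xs)"
  then obtain ts where "set ts \<subseteq> carrier G" "length ts = Suc (length xs)"
    "w = prodl G (map (\<lambda>(t, g). t \<otimes> g \<otimes> inv t) (zip ts (x # xs)))" unfolding CP_def by auto
  then show "\<exists>t z. w = t \<otimes> x \<otimes> inv t \<otimes> z \<and> t \<in> carrier G \<and> z \<in> CP G xs"
    by (cases ts) (auto simp: CP_def)
next
  fix t z assume "t \<in> carrier G" "z \<in> CP G xs"
  then obtain ts where "set ts \<subseteq> carrier G" "length ts = length xs"
    "z = prodl G (map (\<lambda>(t, g). t \<otimes> g \<otimes> inv t) (zip ts xs))" unfolding CP_def by blast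
  then show "t \<otimes> x \<otimes> inv t \<otimes> z \<in> CP G (x # xs)" unfolding CP_def
    using \<open>t \<in> carrier G\<close> by (intro CollectI exI[of _ "t # ts"]) auto
qed

lemma CP_closed: "set xs \<subseteq> carrier G \<Longrightarrow> z \<in> CP G xs \<Longrightarrow> z \<in> carrier G"
  by (induction xs arbitrary: z) (auto simp: CP_Nil CP_Cons)

lemma CP_append: "set xs \<subseteq> carrier G \<Longrightarrow> set ys \<subseteq> carrier G \<Longrightarrow>
   CP G (xs @ ys) = {u \<otimes> v | u v. u \<in> CP G xs \<and> v \<in> CP G ys}"
proof (induction xs)
  case Nil then show ?case using CP_closed[OF Nil.prems(2)] by (auto simp: CP_Nil) (metis l_one)
next
  case (Cons x xs)
  have xs: "set xs \<subseteq> carrier G" and x: "x \<in> carrier G" using Cons.prems by auto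
  show ?case
  proof safe
    fix w assume "w \<in> CP G ((x # xs) @ ys)"
    then obtain t z where tz: "w = t \<otimes> x \<otimes> inv t \<otimes> z" "t \<in> carrier G" "z \<in> CP G (xs @ ys)"
      by (auto simp: CP_Cons)
    then obtain u v where uv: "z = u \<otimes> v" "u \<in> CP G xs" "v \<in> CP G ys" using Cons xs by auto
    have "u \<in> carrier G" "v \<in> carrier G" using uv CP_closed xs Cons.prems by auto
    then have "w = (t \<otimes> x \<otimes> inv t \<otimes> u) \<otimes> v" using tz uv x by (simp add: m_assoc)
    moreover have "t \<otimes> x \<otimes> inv t \<otimes> u \<in> CP G (x # xs)" using tz uv by (auto simp: CP_Cons)
    ultimately show "\<exists>u v. w = u \<otimes> v \<and> u \<in> CP G (x # xs) \<and> v \<in> CP G ys" using uv by blast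
  next
    fix u v assume u: "u \<in> CP G (x # xs)" and v: "v \<in> CP G ys"
    then obtain t z where tz: "u = t \<otimes> x \<otimes> inv t \<otimes> z" "t \<in> carrier G" "z \<in> CP G xs"
      by (auto simp: CP_Cons)
    have "z \<in> carrier G" "v \<in> carrier G" using tz v CP_closed xs Cons.prems by auto
    then have "u \<otimes> v = t \<otimes> x \<otimes> inv t \<otimes> (z \<otimes> v)" using tz x by (simp add: m_assoc)
    moreover have "z \<otimes> v \<in> CP G (xs @ ys)" using Cons xs tz v by auto
    ultimately show "u \<otimes> v \<in> CP G ((x # xs) @ ys)" using tz by (auto simp: CP_Cons)
  qed
qed

lemma CP_move: assumes "set xs \<subseteq> carrier G" "set ys \<subseteq> carrier G" "x \<in> carrier G"
  shows "CP G (xs @ x # ys) = CP G (x # xs @ ys)"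
proof safe
  fix w assume "w \<in> CP G (xs @ x # ys)"
  then obtain u v where uv: "w = u \<otimes> v" "u \<in> CP G xs" "v \<in> CP G (x # ys)"
    using CP_append[of xs "x # ys"] assms by auto
  then obtain t z where tz: "v = t \<otimes> x \<otimes> inv t \<otimes> z" "t \<in> carrier G" "z \<in> CP G ys"
    by (auto simp: CP_Cons)
  have uc: "u \<in> carrier G" and zc: "z \<in> carrier G" using uv tz CP_closed assms by auto
  have e: "inv u \<otimes> (u \<otimes> z) = z" using uc zc by (simp add: m_assoc[symmetric])
  have "w = (u \<otimes> t) \<otimes> x \<otimes> inv (u \<otimes> t) \<otimes> (u \<otimes> z)"
    using uc zc tz assms uv by (simp add: m_assoc inv_mult_group e)
  moreover have "u \<otimes> z \<in> CP G (xs @ ys)" using CP_append assms uv tz by auto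
  ultimately show "w \<in> CP G (x # xs @ ys)" using uc tz by (auto simp: CP_Cons)
next
  fix w assume "w \<in> CP G (x # xs @ ys)"
  then obtain t z where tz: "w = t \<otimes> x \<otimes> inv t \<otimes> z" "t \<in> carrier G" "z \<in> CP G (xs @ ys)"
    by (auto simp: CP_Cons)
  then obtain u v where uv: "z = u \<otimes> v" "u \<in> CP G xs" "v \<in> CP G ys"
    using CP_append assms by auto
  have uc: "u \<in> carrier G" and vc: "v \<in> carrier G" using uv CP_closed assms by auto
  have e: "inv u \<otimes> (u \<otimes> z) = z" if "z \<in> carrier G" for z using uc that by (simp add: m_assoc[symmetric])
  have "w = u \<otimes> ((inv u \<otimes> t) \<otimes> x \<otimes> inv (inv u \<otimes> t) \<otimes> v)"
    using uc vc tz assms uv by (simp add: m_assoc inv_mult_group e)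
  moreover have "(inv u \<otimes> t) \<otimes> x \<otimes> inv (inv u \<otimes> t) \<otimes> v \<in> CP G (x # ys)"
    using uc tz uv by (auto simp: CP_Cons)
  ultimately show "w \<in> CP G (xs @ x # ys)" using CP_append[of xs "x # ys"] assms uv by auto
qed

lemma CP_perm: "mset xs = mset ys \<Longrightarrow> set xs \<subseteq> carrier G \<Longrightarrow> CP G xs = CP G ys"
proof (induction xs arbitrary: ys)
  case Nil then show ?case using Nil.prems(1) by simp
next
  case (Cons x xs)
  have "x \<in> set ys" using Cons.prems by (metis list.set_intros(1) set_mset_mset)
  then obtain ys1 ys2 where ys: "ys = ys1 @ x # ys2" by (meson split_list)
  have m: "mset xs = mset (ys1 @ ys2)" using Cons.prems ys by simp
  have sy: "set ys \<subseteq> carrier G" using Cons.prems by (metis set_mset_mset)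
  have "CP G ys = CP G (x # ys1 @ ys2)" using CP_move sy ys by auto
  also have "\<dots> = CP G (x # xs)" using Cons.IH[OF m] Cons.prems by (simp add: CP_Cons)
  finally show ?case by simp
qed


lemma CM_mult: "z1 \<in> CM G a \<Longrightarrow> z2 \<in> CM G b \<Longrightarrow> z1 \<otimes> z2 \<in> CM G (a + b)"
proof (induction a arbitrary: z1)
  case 0 then show ?case using CM_closed by (auto simp: CM_0)
next
  case (Suc a)
  then obtain x y z where "z1 = commutator G x y \<otimes> z" "x \<in> carrier G" "y \<in> carrier G" "z \<in> CM G a"
    by (auto simp: CM_Suc)
  moreover have "z \<otimes> z2 \<in> CM G (a + b)" using Suc calculation by blast
  ultimately show ?case using CM_closed Suc.prems by (auto simp: CM_Suc m_assoc)
qed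

lemma comm_CM1: "a \<in> carrier G \<Longrightarrow> b \<in> carrier G \<Longrightarrow> commutator G a b \<in> CM G 1"
proof -
  assume ab: "a \<in> carrier G" "b \<in> carrier G"
  have "commutator G a b \<otimes> \<one> \<in> CM G (Suc 0)" unfolding CM_Suc CM_0 using ab by blast
  then show ?thesis using ab by simp
qed

lemma comm_one: "commutator G \<one> \<one> = \<one>" by (simp add: commutator_def)

lemma CM_mono: "K \<le> K' \<Longrightarrow> z \<in> CM G K \<Longrightarrow> z \<in> CM G K'"
proof (induction K' arbitrary: z rule: dec_induct)
  case base then show ?case by simp
next
  case (step n)
  have "z \<otimes> commutator G \<one> \<one> \<in> CM G (n + 1)" using step comm_CM1 CM_mult by blast
  then show ?case using step CM_closed comm_one by simp
qed

lemma comm_conj: "t \<in> carrier G \<Longrightarrow> a \<in> carrier G \<Longrightarrow> b \<in> carrier G \<Longrightarrow>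
  commutator G (t \<otimes> a \<otimes> inv t) (t \<otimes> b \<otimes> inv t) = t \<otimes> commutator G a b \<otimes> inv t"
  by (simp add: commutator_def m_assoc inv_mult_group)

lemma CM_conj: "z \<in> CM G K \<Longrightarrow> t \<in> carrier G \<Longrightarrow> t \<otimes> z \<otimes> inv t \<in> CM G K"
proof (induction K arbitrary: z)
  case 0 then show ?case by (simp add: CM_0)
next
  case (Suc K)
  then obtain x y w where xyw: "z = commutator G x y \<otimes> w" "x \<in> carrier G" "y \<in> carrier G" "w \<in> CM G K"
    by (auto simp: CM_Suc)
  have wc: "w \<in> carrier G" using xyw CM_closed by blast
  have "t \<otimes> z \<otimes> inv t = (t \<otimes> commutator G x y \<otimes> inv t) \<otimes> (t \<otimes> w \<otimes> inv t)"
    using xyw wc Suc.prems by (simp add: m_assoc)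
  also have "\<dots> = commutator G (t \<otimes> x \<otimes> inv t) (t \<otimes> y \<otimes> inv t) \<otimes> (t \<otimes> w \<otimes> inv t)"
    using comm_conj xyw Suc.prems by simp
  finally have eq: "t \<otimes> z \<otimes> inv t = commutator G (t \<otimes> x \<otimes> inv t) (t \<otimes> y \<otimes> inv t) \<otimes> (t \<otimes> w \<otimes> inv t)" .
  show ?case unfolding CM_Suc using eq Suc.IH[OF xyw(4) Suc.prems(2)] xyw(2,3) Suc.prems(2) by blast
qed

lemma comm_inv: "a \<in> carrier G \<Longrightarrow> b \<in> carrier G \<Longrightarrow> inv (commutator G a b) = commutator G b a"
  by (simp add: commutator_def m_assoc inv_mult_group)

lemma CM_inv: "z \<in> CM G K \<Longrightarrow> inv z \<in> CM G K"
proof (induction K arbitrary: z)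
  case 0 then show ?case by (simp add: CM_0)
next
  case (Suc K)
  then obtain x y w where xyw: "z = commutator G x y \<otimes> w" "x \<in> carrier G" "y \<in> carrier G" "w \<in> CM G K"
    by (auto simp: CM_Suc)
  have wc: "w \<in> carrier G" using xyw CM_closed by blast
  have "inv z = inv w \<otimes> commutator G y x" using xyw wc by (simp add: inv_mult_group comm_inv)
  moreover have "inv w \<otimes> commutator G y x \<in> CM G (K + 1)"
    using CM_mult Suc.IH xyw comm_CM1 by blast
  ultimately show ?case by simp
qed

lemma CM_pow: "z \<in> CM G K \<Longrightarrow> z [^] (n::nat) \<in> CM G (n * K)"
proof (induction n)
  case 0 then show ?case by (simp add: CM_0)
next
  case (Suc n)
  then have "z [^] n \<otimes> z \<in> CM G (n * K + K)" using CM_mult by blast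
  then show ?case by (simp add: add.commute)
qed

lemma expr_perm: "mset xs = mset ys \<Longrightarrow> set xs \<subseteq> carrier G \<Longrightarrow> expr G xs K \<Longrightarrow> expr G ys K"
  using CP_perm by (simp add: expr_def)

lemma expr_mono: "K \<le> K' \<Longrightarrow> expr G xs K \<Longrightarrow> expr G xs K'"
  using CM_mono by (auto simp: expr_def)

lemma expr_app: "set xs \<subseteq> carrier G \<Longrightarrow> set ys \<subseteq> carrier G \<Longrightarrow>
   expr G xs a \<Longrightarrow> expr G ys b \<Longrightarrow> expr G (xs @ ys) (a + b)"
  unfolding expr_def using CP_append CM_mult by blast

lemma expr_prod: "set xs \<subseteq> carrier G \<Longrightarrow> prodl G xs \<in> CM G K \<Longrightarrow> expr G xs K"
proof -
  assume xs: "set xs \<subseteq> carrier G" and p: "prodl G xs \<in> CM G K"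
  have "prodl G xs \<in> CP G xs" using xs
  proof (induction xs)
    case Nil then show ?case by (simp add: CP_Nil)
  next
    case (Cons x xs)
    have "prodl G xs \<in> CP G xs" using Cons by auto
    then have "\<one> \<otimes> x \<otimes> inv \<one> \<otimes> prodl G xs \<in> CP G (x # xs)" unfolding CP_Cons using one_closed by blast
    moreover have "\<one> \<otimes> x \<otimes> inv \<one> \<otimes> prodl G xs = prodl G (x # xs)" using Cons.prems prodl_closed by simp
    ultimately show ?case by simp
  qed
  then show ?thesis using p by (auto simp: expr_def)
qed

lemma CP_ConsI: "t \<in> carrier G \<Longrightarrow> z \<in> CP G xs \<Longrightarrow> t \<otimes> x \<otimes> inv t \<otimes> z \<in> CP G (x # xs)"
  unfolding CP_Cons by blast

lemma CP_ConsE: "w \<in> CP G (x # xs) \<Longrightarrow> \<exists>t z. w = t \<otimes> x \<otimes> inv t \<otimes> z \<and> t \<in> carrier G \<and> z \<in> CP G xs"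
  unfolding CP_Cons by blast

lemma exprI: "w \<in> CM G K \<Longrightarrow> w \<in> CP G xs \<Longrightarrow> expr G xs K"
  unfolding expr_def by blast

lemma exprE: "expr G xs K \<Longrightarrow> \<exists>w. w \<in> CM G K \<and> w \<in> CP G xs"
  unfolding expr_def by blast

lemma expr_one_add: "set xs \<subseteq> carrier G \<Longrightarrow> expr G xs K \<Longrightarrow> expr G (\<one> # xs) K"
proof -
  assume xs: "set xs \<subseteq> carrier G" and e: "expr G xs K"
  obtain z where z: "z \<in> CM G K" "z \<in> CP G xs" using exprE[OF e] by blast
  have "\<one> \<otimes> \<one> \<otimes> inv \<one> \<otimes> z \<in> CP G (\<one> # xs)" using CP_ConsI[OF one_closed z(2)] .
  moreover have "\<one> \<otimes> \<one> \<otimes> inv \<one> \<otimes> z = z" using CP_closed[OF xs z(2)] by simp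
  ultimately show ?thesis using exprI z(1) by metis
qed

lemma expr_one_rem: "set xs \<subseteq> carrier G \<Longrightarrow> expr G (\<one> # xs) K \<Longrightarrow> expr G xs K"
proof -
  assume xs: "set xs \<subseteq> carrier G" and e: "expr G (\<one> # xs) K"
  obtain w where w: "w \<in> CM G K" "w \<in> CP G (\<one> # xs)" using exprE[OF e] by blast
  obtain t z where tz: "w = t \<otimes> \<one> \<otimes> inv t \<otimes> z" "t \<in> carrier G" "z \<in> CP G xs"
    using CP_ConsE[OF w(2)] by blast
  have "w = z" using tz CP_closed[OF xs tz(3)] by simp
  then show ?thesis using exprI w tz by metis
qed

lemma expr_split: assumes "g \<in> carrier G" "set xs \<subseteq> carrier G" "expr G (g [^] (a + b :: int) # xs) K"
  shows "expr G (g [^] a # g [^] b # xs) K"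
proof -
  obtain w where w: "w \<in> CM G K" "w \<in> CP G (g [^] (a + b) # xs)" using exprE[OF assms(3)] by blast
  obtain t z where tz: "w = t \<otimes> g [^] (a+b) \<otimes> inv t \<otimes> z" "t \<in> carrier G" "z \<in> CP G xs"
    using CP_ConsE[OF w(2)] by blast
  have zc: "z \<in> carrier G" using tz CP_closed assms by blast
  have "w = t \<otimes> g [^] a \<otimes> inv t \<otimes> (t \<otimes> g [^] b \<otimes> inv t \<otimes> z)"
    using assms(1) tz zc by (simp add: int_pow_mult m_assoc)
  moreover have "t \<otimes> g [^] a \<otimes> inv t \<otimes> (t \<otimes> g [^] b \<otimes> inv t \<otimes> z) \<in> CP G (g [^] a # g [^] b # xs)"
    using CP_ConsI tz by blast
  ultimately show ?thesis using exprI w by metis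
qed

lemma merge_identity: assumes "X \<in> carrier G" "Y \<in> carrier G" "u \<in> carrier G"
  shows "X \<otimes> (u \<otimes> Y \<otimes> inv u) = commutator G (X \<otimes> u \<otimes> inv X) (X \<otimes> Y \<otimes> inv X) \<otimes> (X \<otimes> Y)"
  using assms by (simp add: commutator_def m_assoc inv_mult_group)

lemma expr_merge: assumes "g \<in> carrier G" "set xs \<subseteq> carrier G" "expr G (g [^] (a::int) # g [^] (b::int) # xs) K"
  shows "expr G (g [^] (a + b) # xs) (Suc K)"
proof -
  obtain w where w: "w \<in> CM G K" "w \<in> CP G (g [^] a # g [^] b # xs)" using exprE[OF assms(3)] by blast
  obtain t z1 where tz1: "w = t \<otimes> g [^] a \<otimes> inv t \<otimes> z1" "t \<in> carrier G" "z1 \<in> CP G (g [^] b # xs)"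
    using CP_ConsE[OF w(2)] by blast
  obtain s z where sz: "z1 = s \<otimes> g [^] b \<otimes> inv s \<otimes> z" "s \<in> carrier G" "z \<in> CP G xs"
    using CP_ConsE[OF tz1(3)] by blast
  define X where "X = t \<otimes> g [^] a \<otimes> inv t"
  define Y where "Y = t \<otimes> g [^] b \<otimes> inv t"
  define u where "u = s \<otimes> inv t"
  have c: "X \<in> carrier G" "Y \<in> carrier G" "u \<in> carrier G" using assms tz1 sz by (auto simp: X_def Y_def u_def)
  have zc: "z \<in> carrier G" using sz CP_closed assms by blast
  have sg: "s \<otimes> g [^] b \<otimes> inv s = u \<otimes> Y \<otimes> inv u"
    using tz1 sz assms by (simp add: u_def Y_def m_assoc inv_mult_group)
  have XY: "X \<otimes> Y = t \<otimes> g [^] (a + b) \<otimes> inv t"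
    using tz1 assms by (simp add: X_def Y_def m_assoc int_pow_mult)
  define C where "C = commutator G (X \<otimes> u \<otimes> inv X) (X \<otimes> Y \<otimes> inv X)"
  have Cc: "C \<in> carrier G" using c by (simp add: C_def)
  define w' where "w' = t \<otimes> g [^] (a + b) \<otimes> inv t \<otimes> z"
  have w'c: "w' \<in> carrier G" using tz1 assms zc by (simp add: w'_def)
  have ww: "w = C \<otimes> w'"
  proof -
    have "w = (X \<otimes> (u \<otimes> Y \<otimes> inv u)) \<otimes> z"
      using tz1 sz sg c zc by (simp add: X_def m_assoc)
    also have "\<dots> = C \<otimes> (X \<otimes> Y) \<otimes> z" using merge_identity[OF c] by (simp add: C_def)
    finally show ?thesis using XY c Cc zc tz1(2) assms(1) by (simp add: m_assoc w'_def)
  qed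
  have "inv C \<in> CM G 1" using CM_inv comm_CM1 c by (simp add: C_def)
  then have "inv C \<otimes> w \<in> CM G (1 + K)" using w(1) CM_mult by blast
  moreover have "inv C \<otimes> w = w'" using ww Cc w'c by simp
  moreover have "w' \<in> CP G (g [^] (a + b) # xs)" unfolding w'_def using CP_ConsI tz1 sz by blast
  ultimately show ?thesis using exprI by (metis plus_1_eq_Suc)
qed

lemma CP_rev_inv: "set xs \<subseteq> carrier G \<Longrightarrow> z \<in> CP G xs \<Longrightarrow> inv z \<in> CP G (rev (map (\<lambda>x. inv x) xs))"
proof (induction xs arbitrary: z)
  case Nil then show ?case by (simp add: CP_Nil)
next
  case (Cons x xs)
  obtain t w where tw: "z = t \<otimes> x \<otimes> inv t \<otimes> w" "t \<in> carrier G" "w \<in> CP G xs"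
    using CP_ConsE[OF Cons.prems(2)] by blast
  have wc: "w \<in> carrier G" using tw Cons CP_closed by auto
  have "inv z = inv w \<otimes> (t \<otimes> inv x \<otimes> inv t \<otimes> \<one>)" using tw wc Cons.prems
    by (simp add: inv_mult_group m_assoc)
  moreover have "t \<otimes> inv x \<otimes> inv t \<otimes> \<one> \<in> CP G [inv x]" using CP_ConsI[OF tw(2)] by (simp add: CP_Nil)
  moreover have "inv w \<in> CP G (rev (map (\<lambda>x. inv x) xs))" using Cons tw by auto
  ultimately show ?case using CP_append[of "rev (map (\<lambda>x. inv x) xs)" "[inv x]"] Cons.prems by auto
qed

lemma expr_rev_inv: "set xs \<subseteq> carrier G \<Longrightarrow> expr G xs K \<Longrightarrow> expr G (rev (map (\<lambda>x. inv x) xs)) K"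
  using CP_rev_inv CM_inv exprI exprE by metis

end

context group
begin

lemma pants_step:
  assumes g: "g \<in> carrier G" and h: "h \<in> carrier G"
  shows "g [^] (Suc (Suc m)) \<otimes> h [^] (Suc (Suc m)) \<otimes> inv ((g \<otimes> h) [^] (Suc (Suc m))) =
    (g [^] m \<otimes> h [^] m \<otimes> inv g) \<otimes> commutator G (g \<otimes> inv (h [^] m)) (g \<otimes> g \<otimes> h) \<otimes> inv (g [^] m \<otimes> h [^] m \<otimes> inv g)
     \<otimes> (g [^] m \<otimes> h [^] m \<otimes> inv ((g \<otimes> h) [^] m))"
proof -
  have h2: "h [^] (Suc (Suc m)) = h \<otimes> h [^] m \<otimes> h"
  proof -
    have "h [^] (Suc (Suc m)) = h [^] (Suc m) \<otimes> h" by (simp only: nat_pow_Suc)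
    also have "\<dots> = h \<otimes> h [^] m \<otimes> h" by (simp only: nat_pow_Suc2[OF h])
    finally show ?thesis .
  qed
  have g2: "g [^] (Suc (Suc m)) = g [^] m \<otimes> g \<otimes> g" using g by simp
  have gh2: "(g \<otimes> h) [^] (Suc (Suc m)) = (g \<otimes> h) [^] m \<otimes> (g \<otimes> h) \<otimes> (g \<otimes> h)" by simp
  have c: "g [^] m \<in> carrier G" "h [^] m \<in> carrier G" "(g \<otimes> h) [^] m \<in> carrier G" using g h by auto
  show ?thesis unfolding h2 g2 gh2 using g h c
    by (simp add: commutator_def m_assoc inv_mult_group)
qed

lemma pants_CM: "g \<in> carrier G \<Longrightarrow> h \<in> carrier G \<Longrightarrow>
   g [^] (n::nat) \<otimes> h [^] n \<otimes> inv ((g \<otimes> h) [^] n) \<in> CM G (n div 2)"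
proof (induction n rule: less_induct)
  case (less n)
  show ?case
  proof (cases n)
    case 0 then show ?thesis by (simp add: CM_0)
  next
    case (Suc n1)
    note n1 = this
    show ?thesis
    proof (cases n1)
      case 0 then show ?thesis using less.prems n1 by (simp add: CM_0 m_assoc)
    next
      case (Suc m)
      have IH: "g [^] m \<otimes> h [^] m \<otimes> inv ((g \<otimes> h) [^] m) \<in> CM G (m div 2)"
        using less.IH[of m] less.prems n1 Suc by simp
      define T where "T = g [^] m \<otimes> h [^] m \<otimes> inv g"
      have Tc: "T \<in> carrier G" using less.prems by (simp add: T_def)
      have "T \<otimes> commutator G (g \<otimes> inv (h [^] m)) (g \<otimes> g \<otimes> h) \<otimes> inv T \<in> CM G 1"
        using CM_conj[OF comm_CM1 Tc] less.prems by simp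
      then have "T \<otimes> commutator G (g \<otimes> inv (h [^] m)) (g \<otimes> g \<otimes> h) \<otimes> inv T
          \<otimes> (g [^] m \<otimes> h [^] m \<otimes> inv ((g \<otimes> h) [^] m)) \<in> CM G (1 + m div 2)"
        using CM_mult IH by blast
      moreover have "1 + m div 2 = n div 2" using n1 Suc by simp
      ultimately show ?thesis using pants_step[OF less.prems, of m] n1 Suc by (simp add: T_def)
    qed
  qed
qed

lemma expr_pants: "g \<in> carrier G \<Longrightarrow> h \<in> carrier G \<Longrightarrow>
   expr G [g [^] (n::nat), h [^] n, inv ((g \<otimes> h) [^] n)] (n div 2)"
  using expr_prod[of "[g [^] n, h [^] n, inv ((g \<otimes> h) [^] n)]"] pants_CM
  by (simp add: m_assoc)

lemma expr_pants_inv: "g \<in> carrier G \<Longrightarrow> h \<in> carrier G \<Longrightarrow>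
   expr G [(g \<otimes> h) [^] (n::nat), inv (h [^] n), inv (g [^] n)] (n div 2)"
proof -
  assume gh: "g \<in> carrier G" "h \<in> carrier G"
  have "inv (g [^] (n::nat) \<otimes> h [^] n \<otimes> inv ((g \<otimes> h) [^] n)) \<in> CM G (n div 2)"
    using CM_inv pants_CM gh by blast
  moreover have "inv (g [^] (n::nat) \<otimes> h [^] n \<otimes> inv ((g \<otimes> h) [^] n)) =
     prodl G [(g \<otimes> h) [^] (n::nat), inv (h [^] n), inv (g [^] n)]"
    using gh by (simp add: inv_mult_group m_assoc)
  ultimately show ?thesis using expr_prod gh by simp
qed

lemma conj_pow: "t \<in> carrier G \<Longrightarrow> x \<in> carrier G \<Longrightarrow> (t \<otimes> x \<otimes> inv t) [^] (N::nat) = t \<otimes> x [^] N \<otimes> inv t"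
  by (induction N) (auto simp: m_assoc)

lemma GP_aux: "set y \<subseteq> carrier G \<Longrightarrow> z \<in> CP G y \<Longrightarrow>
  \<exists>GW. GW \<in> CM G (length y * (N div 2)) \<and> GW \<otimes> z [^] (N::nat) \<in> CP G (map (\<lambda>x. x [^] N) y)"
proof (induction y arbitrary: z)
  case Nil
  then have "z = \<one>" by (simp add: CP_Nil)
  then show ?case by (auto simp: CM_0 CP_Nil)
next
  case (Cons x ys)
  obtain t z0 where tz: "z = t \<otimes> x \<otimes> inv t \<otimes> z0" "t \<in> carrier G" "z0 \<in> CP G ys"
    using CP_ConsE[OF Cons.prems(2)] by blast
  have xc: "x \<in> carrier G" and ysc: "set ys \<subseteq> carrier G" using Cons.prems by auto
  obtain GW0 where GW0: "GW0 \<in> CM G (length ys * (N div 2))" "GW0 \<otimes> z0 [^] N \<in> CP G (map (\<lambda>x. x [^] N) ys)"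
    using Cons.IH[OF ysc tz(3)] by blast
  define X where "X = t \<otimes> x \<otimes> inv t"
  have Xc: "X \<in> carrier G" using xc tz by (simp add: X_def)
  have z0c: "z0 \<in> carrier G" using CP_closed ysc tz by blast
  have GW0c: "GW0 \<in> carrier G" using CM_closed GW0 by blast
  define W where "W = X [^] N \<otimes> z0 [^] N \<otimes> inv ((X \<otimes> z0) [^] N)"
  have W: "W \<in> CM G (N div 2)" using pants_CM Xc z0c by (simp add: W_def)
  have Wc: "W \<in> carrier G" using CM_closed W by blast
  define GW where "GW = (X [^] N \<otimes> GW0 \<otimes> inv (X [^] N)) \<otimes> W"
  have "GW \<in> CM G (length ys * (N div 2) + N div 2)"
    unfolding GW_def using CM_mult CM_conj GW0(1) W Xc by blast
  then have GWm: "GW \<in> CM G (length (x # ys) * (N div 2))" by (simp add: add.commute)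
  have "t \<otimes> x [^] N \<otimes> inv t \<otimes> (GW0 \<otimes> z0 [^] N) \<in> CP G (map (\<lambda>x. x [^] N) (x # ys))"
    using CP_ConsI[OF tz(2) GW0(2)] by simp
  moreover have "t \<otimes> x [^] N \<otimes> inv t \<otimes> (GW0 \<otimes> z0 [^] N) = GW \<otimes> z [^] N"
  proof -
    have "t \<otimes> x [^] N \<otimes> inv t = X [^] N" using conj_pow tz xc by (simp add: X_def)
    moreover have "z = X \<otimes> z0" using tz by (simp add: X_def)
    ultimately show ?thesis using Xc z0c GW0c
      by (simp add: GW_def W_def m_assoc)
  qed
  ultimately show ?case using GWm by metis
qed

lemma expr_GP: "set y \<subseteq> carrier G \<Longrightarrow> expr G y K \<Longrightarrow>
   expr G (map (\<lambda>x. x [^] (N::nat)) y) (length y * (N div 2) + N * K)"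
proof -
  assume y: "set y \<subseteq> carrier G" and e: "expr G y K"
  obtain w where w: "w \<in> CM G K" "w \<in> CP G y" using exprE[OF e] by blast
  obtain GW where GW: "GW \<in> CM G (length y * (N div 2))" "GW \<otimes> w [^] N \<in> CP G (map (\<lambda>x. x [^] N) y)"
    using GP_aux[OF y w(2)] by blast
  have "GW \<otimes> w [^] N \<in> CM G (length y * (N div 2) + N * K)" using CM_mult CM_pow GW w by blast
  then show ?thesis using exprI GW by blast
qed

end

definition rz :: "('a, 'b) monoid_scheme \<Rightarrow> int \<Rightarrow> ('a \<times> int) list \<Rightarrow> 'a list" where
  "rz G m s = map (\<lambda>(g, e). g [^]\<^bsub>G\<^esub> (e * m)) s"

definition sig :: "('a \<times> int) list \<Rightarrow> 'a \<Rightarrow> int" where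
  "sig s = (\<lambda>y. sum_list (map (\<lambda>(g, e). if g = y then e else 0) s))"

lemma rz_Nil [simp]: "rz G m [] = []" by (simp add: rz_def)
lemma rz_Cons [simp]: "rz G m ((g,e) # s) = g [^]\<^bsub>G\<^esub> (e * m) # rz G m s" by (simp add: rz_def)
lemma rz_append [simp]: "rz G m (a @ b) = rz G m a @ rz G m b" by (simp add: rz_def)

lemma sig_Nil [simp]: "sig [] = (\<lambda>_. 0)" by (simp add: sig_def)
lemma sig_Cons [simp]: "sig ((g,e) # s) y = (if g = y then e else 0) + sig s y" by (simp add: sig_def)
lemma sig_append: "sig (a @ b) y = sig a y + sig b y" by (simp add: sig_def)

lemma sig_filter_eq: "sum_list (map snd (filter (\<lambda>p. fst p = g) a)) = sig a g"
  by (induction a) (auto simp: sig_def)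

lemma sig_filter_ne: "sig (filter (\<lambda>p. fst p \<noteq> g) a) y = (if y = g then 0 else sig a y)"
  by (induction a) (auto simp: sig_def)

lemma mset_filter_split: "mset (map f (filter P xs)) + mset (map f (filter (\<lambda>x. \<not> P x) xs)) = mset (map f xs)"
  by (induction xs) auto

context group
begin

lemma expr_permI: "expr G xs K \<Longrightarrow> mset xs = mset ys \<Longrightarrow> set xs \<subseteq> carrier G \<Longrightarrow> expr G ys K"
  using expr_perm by blast

lemma rz_closed: "fst ` set s \<subseteq> carrier G \<Longrightarrow> set (rz G m s) \<subseteq> carrier G"
  by (auto simp: rz_def)

lemma rz_pow: "fst ` set s \<subseteq> carrier G \<Longrightarrow> map (\<lambda>x. x [^] (N::nat)) (rz G 1 s) = rz G (int N) s"
  by (auto simp: rz_def int_pow_pow simp flip: int_pow_int)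

lemma expr_merge_all:
  assumes "g \<in> carrier G" "set X \<subseteq> carrier G" "\<forall>p\<in>set bg. fst p = g" "expr G (rz G m bg @ X) K"
  shows "expr G (g [^] (sum_list (map snd bg) * m) # X) (K + length bg)"
  using assms(2-4)
proof (induction bg arbitrary: X K)
  case Nil
  then show ?case using expr_one_add assms(1) by simp
next
  case (Cons p bg)
  obtain e where p: "p = (g, e)" using Cons.prems by (cases p) auto
  have c: "g [^] (e * m) \<in> carrier G" using assms(1) by simp
  have X': "set (X @ [g [^] (e * m)]) \<subseteq> carrier G" using Cons.prems c by auto
  have rzc: "set (rz G m bg) \<subseteq> carrier G" using Cons.prems assms(1) by (auto simp: rz_def)
  have "expr G (rz G m bg @ (X @ [g [^] (e * m)])) K"
  proof (rule expr_permI[OF Cons.prems(3)])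
    show "mset (rz G m (p # bg) @ X) = mset (rz G m bg @ X @ [g [^] (e * m)])" using p by simp
    show "set (rz G m (p # bg) @ X) \<subseteq> carrier G" using rzc c p Cons.prems by auto
  qed
  then have "expr G (g [^] (sum_list (map snd bg) * m) # X @ [g [^] (e * m)]) (K + length bg)"
    using Cons.IH[OF X'] Cons.prems by auto
  then have "expr G (g [^] (sum_list (map snd bg) * m) # g [^] (e * m) # X) (K + length bg)"
    by (rule expr_permI) (use Cons.prems c assms(1) in auto)
  then have "expr G (g [^] (sum_list (map snd bg) * m + e * m) # X) (Suc (K + length bg))"
    using expr_merge assms(1) Cons.prems by blast
  then show ?case using p by (simp add: algebra_simps)
qed

lemma expr_split_all:
  assumes "g \<in> carrier G" "set X \<subseteq> carrier G" "\<forall>p\<in>set ag. fst p = g"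
    "expr G (g [^] (sum_list (map snd ag) * m) # X) K"
  shows "expr G (rz G m ag @ X) K"
  using assms(2-4)
proof (induction ag arbitrary: X)
  case Nil
  then show ?case using expr_one_rem[OF Nil.prems(1)] by simp
next
  case (Cons p ag)
  obtain e where p: "p = (g, e)" using Cons.prems by (cases p) auto
  have c: "g [^] (e * m) \<in> carrier G" using assms(1) by simp
  have X': "set (X @ [g [^] (e * m)]) \<subseteq> carrier G" using Cons.prems c by auto
  have rzc: "set (rz G m ag) \<subseteq> carrier G" using Cons.prems assms(1) by (auto simp: rz_def)
  have "expr G (g [^] (e * m + sum_list (map snd ag) * m) # X) K"
    using Cons.prems p by (simp add: algebra_simps)
  then have "expr G (g [^] (e * m) # g [^] (sum_list (map snd ag) * m) # X) K"
    by (rule expr_split[OF assms(1) Cons.prems(1)])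
  then have "expr G (g [^] (sum_list (map snd ag) * m) # X @ [g [^] (e * m)]) K"
    by (rule expr_permI) (use Cons.prems c assms(1) in auto)
  then have "expr G (rz G m ag @ X @ [g [^] (e * m)]) K"
    using Cons.IH[OF X'] Cons.prems by auto
  then show ?case
    by (rule expr_permI) (use Cons.prems c rzc p in auto)
qed

lemma expr_CMP:
  assumes "fst ` set a \<subseteq> carrier G" "fst ` set b \<subseteq> carrier G" "sig a = sig b" "set X \<subseteq> carrier G"
    "expr G (rz G m b @ X) K"
  shows "expr G (rz G m a @ X) (K + length b)"
  using assms
proof (induction "length a + length b" arbitrary: a b X K rule: less_induct)
  case less
  show ?case
  proof (cases "a @ b = []")
    case True then show ?thesis using less.prems by simp
  next
    case False
    define g where "g = fst (hd (a @ b))"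
    have gin: "g \<in> fst ` set (a @ b)" using False unfolding g_def by (cases "a @ b") auto
    have gc: "g \<in> carrier G" using gin less.prems by auto
    define ag where "ag = filter (\<lambda>p. fst p = g) a"
    define ao where "ao = filter (\<lambda>p. fst p \<noteq> g) a"
    define bg where "bg = filter (\<lambda>p. fst p = g) b"
    define bo where "bo = filter (\<lambda>p. fst p \<noteq> g) b"
    have lt: "length ao + length bo < length a + length b"
    proof -
      have "length ao \<le> length a" "length bo \<le> length b" unfolding ao_def bo_def by auto
      moreover have "length ao < length a \<or> length bo < length b"
        using gin unfolding ao_def bo_def by (auto intro!: length_filter_less)
      ultimately show ?thesis by linarith
    qed
    have sig_o: "sig ao = sig bo" using less.prems(3) unfolding ao_def bo_def
      by (auto simp: sig_filter_ne)
    have sumg: "sum_list (map snd ag) = sum_list (map snd bg)"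
      unfolding ag_def bg_def sig_filter_eq using less.prems(3) by simp
    have rzc: "\<And>s. fst ` set s \<subseteq> carrier G \<Longrightarrow> set (rz G m s) \<subseteq> carrier G" using rz_closed by blast
    have cs: "fst ` set ag \<subseteq> carrier G" "fst ` set ao \<subseteq> carrier G" "fst ` set bg \<subseteq> carrier G" "fst ` set bo \<subseteq> carrier G"
      using less.prems unfolding ag_def ao_def bg_def bo_def by auto
    define c where "c = g [^] (sum_list (map snd bg) * m)"
    have cc: "c \<in> carrier G" using gc by (simp add: c_def)
    have m1: "mset (rz G m b @ X) = mset (rz G m bg @ (rz G m bo @ X))"
      using mset_filter_split[of "\<lambda>(g, e). g [^] (e * m)" "\<lambda>p. fst p = g" b]
      unfolding bg_def bo_def rz_def by (simp add: algebra_simps)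
    have "expr G (rz G m bg @ (rz G m bo @ X)) K"
      by (rule expr_permI[OF less.prems(5) m1]) (use less.prems rzc in auto)
    moreover have "set (rz G m bo @ X) \<subseteq> carrier G" using rzc[OF cs(4)] less.prems(4) by simp
    moreover have "\<forall>p\<in>set bg. fst p = g" unfolding bg_def by simp
    ultimately have "expr G (c # rz G m bo @ X) (K + length bg)"
      unfolding c_def using expr_merge_all[OF gc] by blast
    then have "expr G (rz G m bo @ (X @ [c])) (K + length bg)"
      by (rule expr_permI) (use cc cs rzc less.prems(4) in auto)
    moreover have "set (X @ [c]) \<subseteq> carrier G" using less.prems(4) cc by simp
    ultimately have "expr G (rz G m ao @ (X @ [c])) (K + length bg + length bo)"
      using less.hyps[OF lt cs(2) cs(4) sig_o] by blast
    then have "expr G (c # rz G m ao @ X) (K + length bg + length bo)"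
      by (rule expr_permI) (use cc cs rzc less.prems(4) in auto)
    then have e3: "expr G (g [^] (sum_list (map snd ag) * m) # (rz G m ao @ X)) (K + length bg + length bo)"
      unfolding c_def sumg by simp
    have "set (rz G m ao @ X) \<subseteq> carrier G" using rzc[OF cs(2)] less.prems(4) by simp
    moreover have "\<forall>p\<in>set ag. fst p = g" unfolding ag_def by simp
    ultimately have "expr G (rz G m ag @ (rz G m ao @ X)) (K + length bg + length bo)"
      using expr_split_all[OF gc _ _ e3] by blast
    moreover have m2: "mset (rz G m ag @ (rz G m ao @ X)) = mset (rz G m a @ X)"
      using mset_filter_split[of "\<lambda>(g, e). g [^] (e * m)" "\<lambda>p. fst p = g" a]
      unfolding ag_def ao_def rz_def by (simp add: algebra_simps)
    moreover have "length bg + length bo = length b"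
      unfolding bg_def bo_def using sum_length_filter_compl[of "\<lambda>p. fst p = g" b] by simp
    ultimately show ?thesis
      using expr_permI[OF _ m2] cs rzc less.prems(4) by (simp add: add.assoc)
  qed
qed

end

context group
begin

lemma defect_set_bdd: "quasimorphism G \<phi> \<Longrightarrow> a \<in> carrier G \<Longrightarrow> b \<in> carrier G \<Longrightarrow>
   \<bar>\<phi> a + \<phi> b - \<phi> (a \<otimes> b)\<bar> \<le> defect G \<phi>"
  unfolding quasimorphism_def defect_def
  by (rule cSup_upper) (auto simp: defect_set_def)

lemma qm_upper: "quasimorphism G \<phi> \<Longrightarrow> a \<in> carrier G \<Longrightarrow> b \<in> carrier G \<Longrightarrow>
   \<phi> (a \<otimes> b) \<le> \<phi> a + \<phi> b + defect G \<phi>"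
  using defect_set_bdd[of \<phi> a b] by linarith

lemma qm_lower: "quasimorphism G \<phi> \<Longrightarrow> a \<in> carrier G \<Longrightarrow> b \<in> carrier G \<Longrightarrow>
   \<phi> a + \<phi> b - defect G \<phi> \<le> \<phi> (a \<otimes> b)"
  using defect_set_bdd[of \<phi> a b] by linarith

lemma hom_one: "homogeneous G \<phi> \<Longrightarrow> \<phi> \<one> = 0"
  unfolding homogeneous_def by (metis int_pow_0 mult_zero_left of_int_0 one_closed)

lemma hom_inv: "homogeneous G \<phi> \<Longrightarrow> g \<in> carrier G \<Longrightarrow> \<phi> (inv g) = - \<phi> g"
proof -
  assume h: "homogeneous G \<phi>" and g: "g \<in> carrier G"
  have "\<phi> (g [^] (-1::int)) = of_int (-1) * \<phi> g" using h g unfolding homogeneous_def by blast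
  moreover have "g [^] (-1::int) = inv g" using g int_pow_neg[of g 1] by simp
  ultimately show ?thesis by simp
qed

lemma hom_nat: "homogeneous G \<phi> \<Longrightarrow> g \<in> carrier G \<Longrightarrow> \<phi> (g [^] (n::nat)) = real n * \<phi> g"
proof -
  assume h: "homogeneous G \<phi>" and g: "g \<in> carrier G"
  have "\<phi> (g [^] (int n)) = of_int (int n) * \<phi> g" using h g unfolding homogeneous_def by blast
  then show ?thesis by (simp add: int_pow_int)
qed

lemma hom_int: "homogeneous G \<phi> \<Longrightarrow> g \<in> carrier G \<Longrightarrow> \<phi> (g [^] (n::int)) = real_of_int n * \<phi> g"
  unfolding homogeneous_def by blast

lemma defect_nonneg: "quasimorphism G \<phi> \<Longrightarrow> homogeneous G \<phi> \<Longrightarrow> 0 \<le> defect G \<phi>"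
  using defect_set_bdd[of \<phi> \<one> \<one>] hom_one by simp

lemma qm_conj: assumes q: "quasimorphism G \<phi>" and h: "homogeneous G \<phi>"
  and t: "t \<in> carrier G" and x: "x \<in> carrier G"
  shows "\<phi> (t \<otimes> x \<otimes> inv t) = \<phi> x"
proof (rule ccontr)
  assume ne: "\<phi> (t \<otimes> x \<otimes> inv t) \<noteq> \<phi> x"
  define D where "D = defect G \<phi>"
  define d where "d = \<phi> (t \<otimes> x \<otimes> inv t) - \<phi> x"
  have dpos: "\<bar>d\<bar> > 0" using ne by (simp add: d_def)
  have bound: "real n * \<bar>d\<bar> \<le> 2 * D" for n :: nat
  proof -
    have e: "(t \<otimes> x \<otimes> inv t) [^] n = t \<otimes> (x [^] n \<otimes> inv t)" using conj_pow t x by (simp add: m_assoc)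
    have c: "x [^] n \<in> carrier G" "x [^] n \<otimes> inv t \<in> carrier G" using x t by auto
    have u1: "\<phi> (t \<otimes> (x [^] n \<otimes> inv t)) \<le> \<phi> t + \<phi> (x [^] n \<otimes> inv t) + D"
      using qm_upper[OF q t c(2)] by (simp add: D_def)
    have u2: "\<phi> (x [^] n \<otimes> inv t) \<le> \<phi> (x [^] n) + \<phi> (inv t) + D"
      using qm_upper[OF q c(1)] t by (simp add: D_def)
    have l1: "\<phi> t + \<phi> (x [^] n \<otimes> inv t) - D \<le> \<phi> (t \<otimes> (x [^] n \<otimes> inv t))"
      using qm_lower[OF q t c(2)] by (simp add: D_def)
    have l2: "\<phi> (x [^] n) + \<phi> (inv t) - D \<le> \<phi> (x [^] n \<otimes> inv t)"
      using qm_lower[OF q c(1)] t by (simp add: D_def)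
    have "\<phi> ((t \<otimes> x \<otimes> inv t) [^] n) = real n * \<phi> (t \<otimes> x \<otimes> inv t)" using hom_nat[OF h] t x by simp
    moreover have "\<phi> (x [^] n) = real n * \<phi> x" using hom_nat[OF h x] .
    moreover have "\<phi> (inv t) = - \<phi> t" using hom_inv[OF h t] .
    ultimately have "\<bar>real n * \<phi> (t \<otimes> x \<otimes> inv t) - real n * \<phi> x\<bar> \<le> 2 * D"
      using u1 u2 l1 l2 e by (simp add: abs_le_iff)
    then show ?thesis by (simp add: d_def right_diff_distrib[symmetric] abs_mult)
  qed
  obtain n :: nat where "2 * D / \<bar>d\<bar> < real n" using reals_Archimedean2 by blast
  then have "2 * D < real n * \<bar>d\<bar>" using dpos by (simp add: field_simps)
  then show False using bound[of n] by simp
qed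

lemma qm_comm: assumes q: "quasimorphism G \<phi>" and h: "homogeneous G \<phi>"
  and a: "a \<in> carrier G" and b: "b \<in> carrier G"
  shows "\<phi> (commutator G a b) \<le> defect G \<phi>"
proof -
  have "commutator G a b = (a \<otimes> b \<otimes> inv a) \<otimes> inv b" by (simp add: commutator_def)
  moreover have "\<phi> ((a \<otimes> b \<otimes> inv a) \<otimes> inv b) \<le> \<phi> (a \<otimes> b \<otimes> inv a) + \<phi> (inv b) + defect G \<phi>"
    using qm_upper[OF q] a b by simp
  moreover have "\<phi> (a \<otimes> b \<otimes> inv a) = \<phi> b" using qm_conj[OF q h a b] .
  moreover have "\<phi> (inv b) = - \<phi> b" using hom_inv[OF h b] .
  ultimately show ?thesis by simp
qed

lemma qm_CM: assumes q: "quasimorphism G \<phi>" and h: "homogeneous G \<phi>"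
  shows "z \<in> CM G K \<Longrightarrow> \<phi> z \<le> 2 * real K * defect G \<phi>"
proof (induction K arbitrary: z)
  case 0 then show ?case using hom_one[OF h] by (simp add: CM_0)
next
  case (Suc K)
  then obtain a b w where abw: "z = commutator G a b \<otimes> w" "a \<in> carrier G" "b \<in> carrier G" "w \<in> CM G K"
    by (auto simp: CM_Suc)
  have "\<phi> z \<le> \<phi> (commutator G a b) + \<phi> w + defect G \<phi>"
    using qm_upper[OF q] abw CM_closed by simp
  also have "\<dots> \<le> defect G \<phi> + 2 * real K * defect G \<phi> + defect G \<phi>"
    using qm_comm[OF q h abw(2,3)] Suc.IH[OF abw(4)] by simp
  finally show ?case by (simp add: algebra_simps)
qed

lemma qm_CP: assumes q: "quasimorphism G \<phi>" and h: "homogeneous G \<phi>"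
  shows "set xs \<subseteq> carrier G \<Longrightarrow> z \<in> CP G xs \<Longrightarrow> sum_list (map \<phi> xs) \<le> \<phi> z + real (length xs) * defect G \<phi>"
proof (induction xs arbitrary: z)
  case Nil then show ?case using hom_one[OF h] by (simp add: CP_Nil)
next
  case (Cons x xs)
  obtain t w where tw: "z = t \<otimes> x \<otimes> inv t \<otimes> w" "t \<in> carrier G" "w \<in> CP G xs"
    using CP_ConsE[OF Cons.prems(2)] by blast
  have xc: "x \<in> carrier G" and xs: "set xs \<subseteq> carrier G" using Cons.prems by auto
  have wc: "w \<in> carrier G" using CP_closed xs tw by blast
  have "\<phi> (t \<otimes> x \<otimes> inv t) + \<phi> w - defect G \<phi> \<le> \<phi> z"
    using qm_lower[OF q, of "t \<otimes> x \<otimes> inv t" w] tw xc wc by simp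
  then have "\<phi> x + \<phi> w - defect G \<phi> \<le> \<phi> z" using qm_conj[OF q h tw(2) xc] by simp
  moreover have "sum_list (map \<phi> xs) \<le> \<phi> w + real (length xs) * defect G \<phi>" using Cons.IH[OF xs tw(3)] .
  ultimately show ?case by (simp add: algebra_simps)
qed

lemma qm_expr: assumes q: "quasimorphism G \<phi>" and h: "homogeneous G \<phi>"
  and xs: "set xs \<subseteq> carrier G" and e: "expr G xs K"
  shows "sum_list (map \<phi> xs) \<le> 2 * real K * defect G \<phi> + real (length xs) * defect G \<phi>"
proof -
  obtain w where w: "w \<in> CM G K" "w \<in> CP G xs" using exprE[OF e] by blast
  show ?thesis using qm_CP[OF q h xs w(2)] qm_CM[OF q h w(1)] by simp
qed

end

lemma cl_le: "expr G xs K \<Longrightarrow> cl G xs \<le> enat K"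
  unfolding cl_expr by (rule Inf_lower) blast

lemma cl_attained: assumes "cl G xs = enat c" shows "expr G xs c"
proof -
  have ne: "\<exists>K. expr G xs K"
  proof (rule ccontr)
    assume "\<not> (\<exists>K. expr G xs K)"
    then have "{enat K | K. expr G xs K} = {}" by blast
    then show False using assms unfolding cl_expr by (simp add: top_enat_def)
  qed
  define K0 where "K0 = (LEAST K. expr G xs K)"
  have e0: "expr G xs K0" unfolding K0_def using ne by (metis LeastI)
  have "cl G xs = enat K0"
  proof (rule antisym)
    show "cl G xs \<le> enat K0" using cl_le[OF e0] .
    show "enat K0 \<le> cl G xs" unfolding cl_expr
      by (rule Inf_greatest) (auto simp: K0_def intro: Least_le)
  qed
  then show ?thesis using assms e0 by simp
qed

lemma scl_upper:
  assumes "\<And>n. n \<ge> 1 \<Longrightarrow> cl G (map (\<lambda>g. g [^]\<^bsub>G\<^esub> n) y) \<le> enat (n * A + B)"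
  shows "scl G y \<le> ereal (real A)"
proof -
  define b where "b n = ereal (real A + real B / real n)" for n :: nat
  have ev: "eventually (\<lambda>n. ereal_of_enat (cl G (map (\<lambda>g. g [^]\<^bsub>G\<^esub> n) y)) / ereal (real n) \<le> b n) sequentially"
    unfolding eventually_sequentially
  proof (intro exI[of _ 1] allI impI)
    fix n :: nat assume n: "n \<ge> 1"
    obtain k where k: "cl G (map (\<lambda>g. g [^]\<^bsub>G\<^esub> n) y) = enat k" "k \<le> n * A + B"
      using assms[OF n] by (cases "cl G (map (\<lambda>g. g [^]\<^bsub>G\<^esub> n) y)") auto
    have "real k \<le> real (n * A + B)" using k by (simp only: of_nat_le_iff)
    then have "real k / real n \<le> real (n * A + B) / real n"
      by (intro divide_right_mono) auto
    also have "\<dots> = real A + real B / real n" using n by (simp add: field_simps)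
    finally show "ereal_of_enat (cl G (map (\<lambda>g. g [^]\<^bsub>G\<^esub> n) y)) / ereal (real n) \<le> b n"
      using k n by (simp add: b_def)
  qed
  have lim: "b \<longlonglongrightarrow> ereal (real A)"
    unfolding b_def lim_ereal using tendsto_add[OF tendsto_const lim_const_over_n[of "real B"]] by simp
  have "scl G y \<le> Liminf sequentially b"
    unfolding scl_def by (rule Liminf_mono[OF ev])
  also have "\<dots> = ereal (real A)" using lim_imp_Liminf[OF _ lim] by simp
  finally show ?thesis .
qed

context group
begin

lemma bavard:
  assumes q: "quasimorphism G \<phi>" and h: "homogeneous G \<phi>"
    and y: "set y \<subseteq> carrier G" and s: "scl G y \<le> ereal L"
  shows "sum_list (map \<phi> y) \<le> 2 * defect G \<phi> * L"
proof (rule field_le_epsilon)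
  fix e :: real assume e: "0 < e"
  define D where "D = defect G \<phi>"
  define S where "S = sum_list (map \<phi> y)"
  have D0: "0 \<le> D" using defect_nonneg[OF q h] by (simp add: D_def)
  define \<epsilon> where "\<epsilon> = e / (2 * D + 1)"
  have eps: "0 < \<epsilon>" using e D0 by (simp add: \<epsilon>_def)
  have eps2: "2 * D * \<epsilon> + \<epsilon> = e"
  proof -
    have "2 * D * \<epsilon> + \<epsilon> = (2 * D + 1) * \<epsilon>" by (simp add: algebra_simps)
    also have "\<dots> = e" using D0 by (simp add: \<epsilon>_def)
    finally show ?thesis .
  qed
  define a where "a n = ereal_of_enat (cl G (map (\<lambda>g. g [^] n) y)) / ereal (real n)" for n :: nat
  have "ereal L < ereal (L + \<epsilon>)" using eps by simp
  then have "Liminf sequentially a < ereal (L + \<epsilon>)" using s unfolding scl_def a_def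
    by (rule le_less_trans[rotated])
  then have "\<not> (ereal (L + \<epsilon>) \<le> Liminf sequentially a)" by simp
  then obtain z where z: "z < ereal (L + \<epsilon>)" "\<not> eventually (\<lambda>n. z < a n) sequentially"
    unfolding le_Liminf_iff by blast
  then have fr: "frequently (\<lambda>n. a n < ereal (L + \<epsilon>)) sequentially"
    unfolding frequently_def by (auto elim: eventually_mono simp: not_less) (meson eventually_mono le_less_trans not_le)
  define M where "M = nat \<lceil>real (length y) * D / \<epsilon>\<rceil> + 1"
  have evM: "eventually (\<lambda>n. M \<le> n) sequentially" by (rule eventually_ge_at_top)
  obtain n where n: "M \<le> n" "a n < ereal (L + \<epsilon>)"
    using frequently_ex[OF frequently_eventually_conj[OF fr evM]] by blast
  have n1: "n \<ge> 1" using n(1) by (simp add: M_def)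
  obtain c where c: "cl G (map (\<lambda>g. g [^] n) y) = enat c"
  proof (cases "cl G (map (\<lambda>g. g [^] n) y)")
    case (enat c) then show ?thesis using that by blast
  next
    case infinity then have "a n = \<infinity>" using n1 by (simp add: a_def)
    then show ?thesis using n(2) by simp
  qed
  have ex: "expr G (map (\<lambda>g. g [^] n) y) c" using cl_attained[OF c] .
  have yc: "set (map (\<lambda>g. g [^] n) y) \<subseteq> carrier G" using y by auto
  have "sum_list (map \<phi> (map (\<lambda>g. g [^] n) y)) \<le> 2 * real c * D + real (length y) * D"
    using qm_expr[OF q h yc ex] by (simp add: D_def)
  moreover have "sum_list (map \<phi> (map (\<lambda>g. g [^] n) y)) = real n * S"
    unfolding S_def using y by (induction y) (auto simp: hom_nat[OF h] algebra_simps)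
  ultimately have nS: "real n * S \<le> 2 * real c * D + real (length y) * D" by simp
  have cn: "real c / real n < L + \<epsilon>" using n(2) c n1 by (simp add: a_def)
  have "real (length y) * D / \<epsilon> \<le> real M" unfolding M_def by linarith
  then have "real (length y) * D \<le> \<epsilon> * real M" using eps by (simp add: field_simps)
  also have "\<dots> \<le> \<epsilon> * real n" using n(1) eps by simp
  finally have lyD: "real (length y) * D / real n \<le> \<epsilon>" using n1 by (simp add: field_simps)
  have "S \<le> 2 * D * (real c / real n) + real (length y) * D / real n"
    using nS n1 by (simp add: field_simps)
  also have "\<dots> \<le> 2 * D * (L + \<epsilon>) + \<epsilon>"
    using cn lyD D0 by (intro add_mono mult_left_mono) auto
  also have "\<dots> = 2 * D * L + e" using eps2 by (simp add: algebra_simps)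
  finally show "sum_list (map \<phi> y) \<le> 2 * defect G \<phi> * L + e" by (simp add: S_def D_def)
qed

end

locale iso_setup =
  G1: group G1 + G2: group G2
  for G1 :: "('a, 'b) monoid_scheme" and G2 :: "('c, 'd) monoid_scheme" +
  fixes f :: "'a \<Rightarrow> 'c" and \<phi>1 :: "'a \<Rightarrow> real"
  assumes fhom: "f \<in> hom G1 G2" and iso: "scl_isometric G1 G2 f"
    and q1: "quasimorphism G1 \<phi>1" and h1: "homogeneous G1 \<phi>1"
begin

abbreviation "D \<equiv> defect G1 \<phi>1"

lemma D0: "0 \<le> D" using G1.defect_nonneg[OF q1 h1] .

lemma f_pow: "g \<in> carrier G1 \<Longrightarrow> f (g [^]\<^bsub>G1\<^esub> (n::int)) = f g [^]\<^bsub>G2\<^esub> n"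
  using hom_int_pow[OF fhom _ G1.is_group G2.is_group] by blast

lemma f_closed: "g \<in> carrier G1 \<Longrightarrow> f g \<in> carrier G2"
  using fhom by (auto simp: hom_def)

lemma f_mult: "g \<in> carrier G1 \<Longrightarrow> h \<in> carrier G1 \<Longrightarrow> f (g \<otimes>\<^bsub>G1\<^esub> h) = f g \<otimes>\<^bsub>G2\<^esub> f h"
  using fhom by (auto simp: hom_def)

lemma dom_core:
  assumes t: "fst ` set t \<subseteq> carrier G1" and s: "fst ` set s \<subseteq> carrier G2"
    and sg: "sig (map (\<lambda>(g, e). (f g, e)) t) = sig s"
    and ex: "expr G2 (rz G2 1 s) c"
  shows "sum_list (map (\<lambda>(g, e). real_of_int e * \<phi>1 g) t) \<le> 2 * D * real (c + length s)"
proof -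
  define y where "y = rz G1 1 t"
  define u where "u = map (\<lambda>(g, e). (f g, e)) t"
  have yc: "set y \<subseteq> carrier G1" using G1.rz_closed[OF t] by (simp add: y_def)
  have uc: "fst ` set u \<subseteq> carrier G2" using t f_closed by (auto simp: u_def)
  have my: "map f y = rz G2 1 u" using t f_pow by (auto simp: y_def u_def rz_def)
  have rzs: "set (rz G2 1 s) \<subseteq> carrier G2" using G2.rz_closed[OF s] .
  have cln: "cl G2 (map (\<lambda>g. g [^]\<^bsub>G2\<^esub> n) (rz G2 1 u)) \<le> enat (n * (c + length s) + length s)"
    if n: "n \<ge> 1" for n :: nat
  proof -
    have lr: "length (rz G2 1 s) = length s" by (simp add: rz_def)
    have e1: "expr G2 (map (\<lambda>x. x [^]\<^bsub>G2\<^esub> n) (rz G2 1 s)) (length (rz G2 1 s) * (n div 2) + n * c)"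
      using G2.expr_GP[OF rzs ex] .
    have e2: "expr G2 (rz G2 (int n) s @ []) (length s * (n div 2) + n * c)"
      using e1 unfolding G2.rz_pow[OF s] lr by simp
    have "sig u = sig s" using sg by (simp add: u_def)
    then have e3: "expr G2 (rz G2 (int n) u @ []) (length s * (n div 2) + n * c + length s)"
      using G2.expr_CMP[OF uc s _ _ e2] by simp
    then have "expr G2 (map (\<lambda>x. x [^]\<^bsub>G2\<^esub> n) (rz G2 1 u)) (length s * (n div 2) + n * c + length s)"
      unfolding G2.rz_pow[OF uc] by simp
    then have "cl G2 (map (\<lambda>x. x [^]\<^bsub>G2\<^esub> n) (rz G2 1 u)) \<le> enat (length s * (n div 2) + n * c + length s)"
      by (rule cl_le)
    moreover have "length s * (n div 2) + n * c + length s \<le> n * (c + length s) + length s"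
    proof -
      have "length s * (n div 2) \<le> length s * n" by simp
      then show ?thesis by (simp add: algebra_simps)
    qed
    ultimately show ?thesis by (meson enat_ord_simps(1) order_trans)
  qed
  have "scl G2 (rz G2 1 u) \<le> ereal (real (c + length s))"
    using scl_upper[of G2 "rz G2 1 u" "c + length s" "length s"] cln by blast
  moreover have "scl G2 (rz G2 1 u) = scl G1 y"
    using iso yc unfolding scl_isometric_def my[symmetric] by blast
  ultimately have "scl G1 y \<le> ereal (real (c + length s))" by simp
  then have "sum_list (map \<phi>1 y) \<le> 2 * D * real (c + length s)"
    using G1.bavard[OF q1 h1 yc] by blast
  moreover have "sum_list (map \<phi>1 y) = sum_list (map (\<lambda>(g, e). real_of_int e * \<phi>1 g) t)"
    unfolding y_def rz_def using t
    by (induction t) (auto simp: G1.hom_int[OF h1])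
  ultimately show ?thesis by simp
qed

end

definition cp :: "nat \<Rightarrow> 'x list \<Rightarrow> 'x list" where "cp n s = concat (replicate n s)"

lemma cp_0 [simp]: "cp 0 s = []" by (simp add: cp_def)
lemma cp_Suc [simp]: "cp (Suc n) s = s @ cp n s" by (simp add: cp_def)
lemma length_cp [simp]: "length (cp n s) = n * length s" by (induction n) auto
lemma set_cp: "set (cp n s) \<subseteq> set s" by (induction n) auto
lemma set_cp_sub: "fst ` set s \<subseteq> A \<Longrightarrow> fst ` set (cp n s) \<subseteq> A" using image_mono[OF set_cp[of n s]] by (rule order_trans)
lemma sig_cp: "sig (cp n s) y = int n * sig s y" by (induction n) (auto simp: sig_append algebra_simps)
lemma rz_cp: "rz G m (cp n s) = cp n (rz G m s)" by (induction n) auto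
lemma length_rz [simp]: "length (rz G m s) = length s" by (simp add: rz_def)
lemma sig_rev: "sig (rev s) y = sig s y" by (simp add: sig_def sum_list_rev flip: rev_map)
lemma sig_neg: "sig (map (\<lambda>(g, e). (g, - e)) s) y = - sig s y"
  by (induction s) (auto simp: sig_def)

lemma expr_Nil: "group G \<Longrightarrow> expr G [] 0"
proof -
  assume "group G"
  then interpret group G .
  show ?thesis using exprI[of "\<one>\<^bsub>G\<^esub>" 0 "[]"] CM_0 CP_Nil by simp
qed

lemma common_denom: "\<exists>M::nat. M > 0 \<and> (\<forall>p \<in> set cs. \<exists>z::int. of_nat M * fst p = (of_int z :: rat))"
proof (induction cs)
  case Nil then show ?case by (intro exI[of _ 1]) simp
next
  case (Cons p cs)
  then obtain M where M: "M > 0" "\<forall>p \<in> set cs. \<exists>z::int. of_nat M * fst p = (of_int z :: rat)" by blast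
  obtain a b where ab: "quotient_of (fst p) = (a, b)" by (cases "quotient_of (fst p)")
  have b: "b > 0" using quotient_of_denom_pos[OF ab] .
  have q: "fst p = of_int a / of_int b" using quotient_of_div[OF ab] .
  show ?case
  proof (intro exI[of _ "M * nat b"] conjI ballI)
    show "M * nat b > 0" using M b by simp
  next
    fix p' assume "p' \<in> set (p # cs)"
    then consider "p' = p" | "p' \<in> set cs" by auto
    then show "\<exists>z::int. of_nat (M * nat b) * fst p' = (of_int z :: rat)"
    proof cases
      case 1
      have "of_nat (M * nat b) * fst p' = of_int (int M * a)" using 1 q b by (simp add: field_simps)
      then show ?thesis by blast
    next
      case 2
      then obtain z where "of_nat M * fst p' = (of_int z :: rat)" using M by blast
      then have "of_nat (M * nat b) * fst p' = of_int (z * b)" using b by (simp add: field_simps)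
      then show ?thesis by blast
    qed
  qed
qed

context iso_setup
begin

definition Pc :: "('c \<Rightarrow> rat) \<Rightarrow> real \<Rightarrow> bool" where
  "Pc v r \<longleftrightarrow> (\<exists>k c s. k > (0::nat) \<and> fst ` set s \<subseteq> carrier G2 \<and> expr G2 (rz G2 1 s) c \<and>
      (\<forall>y. of_nat k * v y = of_int (sig s y)) \<and> 2 * D * real (c + length s) / real k \<le> r)"

lemma PcI: "k > 0 \<Longrightarrow> fst ` set s \<subseteq> carrier G2 \<Longrightarrow> expr G2 (rz G2 1 s) c \<Longrightarrow>
   (\<And>y. of_nat k * v y = of_int (sig s y)) \<Longrightarrow> 2 * D * real (c + length s) / real k \<le> r \<Longrightarrow> Pc v r"
  unfolding Pc_def by blast

lemma expr_cp: "fst ` set s \<subseteq> carrier G2 \<Longrightarrow> expr G2 (rz G2 1 s) c \<Longrightarrow> expr G2 (rz G2 1 (cp n s)) (n * c)"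
proof (induction n)
  case 0 then show ?case using expr_Nil[OF G2.is_group] by simp
next
  case (Suc n)
  have rc: "set (rz G2 1 (cp n s)) \<subseteq> carrier G2" using G2.rz_closed[OF set_cp_sub[OF Suc.prems(1)]] .
  have "expr G2 (rz G2 1 s @ rz G2 1 (cp n s)) (c + n * c)"
    using G2.expr_app[OF G2.rz_closed[OF Suc.prems(1)] rc Suc.prems(2) Suc.IH[OF Suc.prems]] .
  then show ?case by simp
qed

lemma Pc0: "Pc (\<lambda>_. 0) 0"
  by (rule PcI[of 1 "[]" 0]) (auto simp: expr_Nil[OF G2.is_group])

lemma Pc_add: assumes "Pc v r" "Pc w r'" shows "Pc (vadd v w) (r + r')"
proof -
  obtain k1 c1 s1 where 1: "k1 > 0" "fst ` set s1 \<subseteq> carrier G2" "expr G2 (rz G2 1 s1) c1"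
    "\<And>y. of_nat k1 * v y = of_int (sig s1 y)" "2 * D * real (c1 + length s1) / real k1 \<le> r"
    using assms(1) unfolding Pc_def by blast
  obtain k2 c2 s2 where 2: "k2 > 0" "fst ` set s2 \<subseteq> carrier G2" "expr G2 (rz G2 1 s2) c2"
    "\<And>y. of_nat k2 * w y = of_int (sig s2 y)" "2 * D * real (c2 + length s2) / real k2 \<le> r'"
    using assms(2) unfolding Pc_def by blast
  show ?thesis
  proof (rule PcI[of "k1 * k2" "cp k2 s1 @ cp k1 s2" "k2 * c1 + k1 * c2"])
    show "k1 * k2 > 0" using 1 2 by simp
    show "fst ` set (cp k2 s1 @ cp k1 s2) \<subseteq> carrier G2"
      using set_cp_sub[OF 1(2), of k2] set_cp_sub[OF 2(2), of k1] by auto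
    have "expr G2 (rz G2 1 (cp k2 s1) @ rz G2 1 (cp k1 s2)) (k2 * c1 + k1 * c2)"
      using G2.expr_app[OF G2.rz_closed[OF set_cp_sub[OF 1(2)]] G2.rz_closed[OF set_cp_sub[OF 2(2)]]
         expr_cp[OF 1(2,3)] expr_cp[OF 2(2,3)]] .
    then show "expr G2 (rz G2 1 (cp k2 s1 @ cp k1 s2)) (k2 * c1 + k1 * c2)" by simp
  next
    fix y
    have "of_nat (k1 * k2) * vadd v w y = of_nat k2 * (of_nat k1 * v y) + of_nat k1 * (of_nat k2 * w y)"
      by (simp add: vadd_def algebra_simps)
    also have "\<dots> = of_int (sig (cp k2 s1 @ cp k1 s2) y)"
      using 1(4) 2(4) by (simp add: sig_append sig_cp)
    finally show "of_nat (k1 * k2) * vadd v w y = of_int (sig (cp k2 s1 @ cp k1 s2) y)" .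
  next
    have "2 * D * real (k2 * c1 + k1 * c2 + length (cp k2 s1 @ cp k1 s2)) / real (k1 * k2)
        = 2 * D * real (c1 + length s1) / real k1 + 2 * D * real (c2 + length s2) / real k2"
      using 1(1) 2(1) by (simp add: field_simps)
    also have "\<dots> \<le> r + r'" using 1(5) 2(5) by simp
    finally show "2 * D * real (k2 * c1 + k1 * c2 + length (cp k2 s1 @ cp k1 s2)) / real (k1 * k2) \<le> r + r'" .
  qed
qed

lemma Pc_sc: assumes "Pc v r" "q > 0" shows "Pc (vsc q v) (of_rat q * r)"
proof -
  obtain k c s where 1: "k > 0" "fst ` set s \<subseteq> carrier G2" "expr G2 (rz G2 1 s) c"
    "\<And>y. of_nat k * v y = of_int (sig s y)" "2 * D * real (c + length s) / real k \<le> r"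
    using assms(1) unfolding Pc_def by blast
  obtain a b where ab: "quotient_of q = (a, b)" by (cases "quotient_of q")
  have b: "b > 0" using quotient_of_denom_pos[OF ab] .
  have qab: "q = of_int a / of_int b" using quotient_of_div[OF ab] .
  have a: "a > 0" using assms(2) b qab by (simp add: zero_less_divide_iff)
  have qr: "(of_rat q :: real) = real_of_int a / real_of_int b" using qab by (simp add: of_rat_divide)
  show ?thesis
  proof (rule PcI[of "k * nat b" "cp (nat a) s" "nat a * c"])
    show "k * nat b > 0" using 1 b by simp
    show "fst ` set (cp (nat a) s) \<subseteq> carrier G2" using set_cp_sub[OF 1(2)] .
    show "expr G2 (rz G2 1 (cp (nat a) s)) (nat a * c)" using expr_cp[OF 1(2,3)] .
  next
    fix y
    have "of_nat (k * nat b) * vsc q v y = (of_nat k * v y) * (of_int b * q)"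
      using b by (simp add: vsc_def algebra_simps)
    also have "\<dots> = of_int (sig s y) * of_int a" using 1(4) b qab by simp
    also have "\<dots> = of_int (sig (cp (nat a) s) y)" using a by (simp add: sig_cp)
    finally show "of_nat (k * nat b) * vsc q v y = of_int (sig (cp (nat a) s) y)" .
  next
    have "2 * D * real (nat a * c + length (cp (nat a) s)) / real (k * nat b)
        = (real_of_int a / real_of_int b) * (2 * D * real (c + length s) / real k)"
      using a b 1(1) by (simp add: field_simps)
    also have "\<dots> \<le> (real_of_int a / real_of_int b) * r" using 1(5) a b by (intro mult_left_mono) auto
    finally show "2 * D * real (nat a * c + length (cp (nat a) s)) / real (k * nat b) \<le> of_rat q * r"
      using qr by simp
  qed
qed

lemma Pc_sym: assumes "Pc v r" shows "\<exists>r'. Pc (vsc (-1) v) r'"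
proof -
  obtain k c s where 1: "k > 0" "fst ` set s \<subseteq> carrier G2" "expr G2 (rz G2 1 s) c"
    "\<And>y. of_nat k * v y = of_int (sig s y)"
    using assms(1) unfolding Pc_def by blast
  define s' where "s' = rev (map (\<lambda>(g, e). (g, - e)) s)"
  have s'c: "fst ` set s' \<subseteq> carrier G2" using 1(2) by (auto simp: s'_def)
  have "rz G2 1 s' = rev (map (\<lambda>x. inv\<^bsub>G2\<^esub> x) (rz G2 1 s))"
    using 1(2) by (auto simp: s'_def rz_def rev_map G2.int_pow_neg)
  then have "expr G2 (rz G2 1 s') c" using G2.expr_rev_inv[OF G2.rz_closed[OF 1(2)] 1(3)] by simp
  moreover have "of_nat k * vsc (-1) v y = of_int (sig s' y)" for y
    using 1(4)[of y] by (simp add: vsc_def s'_def sig_rev sig_neg)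
  ultimately show ?thesis using PcI[OF 1(1) s'c] by blast
qed

definition fstar :: "(rat \<times> 'a) list \<Rightarrow> 'c \<Rightarrow> rat" where
  "fstar cs = (\<lambda>y. sum_list (map (\<lambda>(q, g). if f g = y then q else 0) cs))"

definition phat :: "(rat \<times> 'a) list \<Rightarrow> real" where
  "phat cs = sum_list (map (\<lambda>(q, g). of_rat q * \<phi>1 g) cs)"

definition \<Gamma>0 :: "(('c \<Rightarrow> rat) \<times> real) set" where
  "\<Gamma>0 = {(fstar cs, phat cs) | cs. snd ` set cs \<subseteq> carrier G1}"

lemma sig_floor:
  assumes "\<forall>p \<in> set cs. of_int \<lfloor>of_nat N * fst p\<rfloor> = of_nat N * (fst p :: rat)"
  shows "of_int (sig (map (\<lambda>(q, g). (f g, \<lfloor>of_nat N * q\<rfloor>)) cs) y) = of_nat N * fstar cs y"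
  using assms by (induction cs) (auto simp: fstar_def algebra_simps)

lemma phat_floor:
  assumes "\<forall>p \<in> set cs. of_int \<lfloor>of_nat N * fst p\<rfloor> = of_nat N * (fst p :: rat)"
  shows "sum_list (map (\<lambda>(g, e). real_of_int e * \<phi>1 g) (map (\<lambda>(q, g). (g, \<lfloor>of_nat N * q\<rfloor>)) cs))
     = real N * phat cs"
  using assms
proof (induction cs)
  case Nil then show ?case by (simp add: phat_def)
next
  case (Cons p cs)
  obtain q g where p: "p = (q, g)" by (cases p)
  have e: "of_int \<lfloor>of_nat N * fst p\<rfloor> = of_nat N * (fst p :: rat)" using Cons.prems by simp
  have "real_of_int \<lfloor>of_nat N * q\<rfloor> = of_rat (of_int \<lfloor>of_nat N * q\<rfloor>)" by simp
  also have "\<dots> = of_rat (of_nat N * q)" using e unfolding p fst_conv by (rule arg_cong)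
  also have "\<dots> = real N * of_rat q" by (simp add: of_rat_mult)
  finally have "real_of_int \<lfloor>of_nat N * q\<rfloor> = real N * of_rat q" .
  then show ?case using Cons p by (simp add: phat_def algebra_simps)
qed

lemma Gamma0_dom: assumes "snd ` set cs \<subseteq> carrier G1" "Pc (fstar cs) r" shows "phat cs \<le> r"
proof -
  obtain k c s where 1: "k > 0" "fst ` set s \<subseteq> carrier G2" "expr G2 (rz G2 1 s) c"
    "\<And>y. of_nat k * fstar cs y = of_int (sig s y)" "2 * D * real (c + length s) / real k \<le> r"
    using assms(2) unfolding Pc_def by blast
  obtain M where M: "M > 0" "\<forall>p \<in> set cs. \<exists>z::int. of_nat M * fst p = (of_int z :: rat)"
    using common_denom by blast
  define N where "N = M * k"
  have N: "N > 0" using M 1 by (simp add: N_def)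
  have integ: "\<forall>p \<in> set cs. of_int \<lfloor>of_nat N * fst p\<rfloor> = of_nat N * (fst p :: rat)"
  proof
    fix p assume "p \<in> set cs"
    then obtain z where "of_nat M * fst p = (of_int z :: rat)" using M by blast
    then have "of_nat N * fst p = (of_int (int k * z) :: rat)" by (simp add: N_def algebra_simps)
    then show "of_int \<lfloor>of_nat N * fst p\<rfloor> = of_nat N * (fst p :: rat)" by simp
  qed
  define t where "t = map (\<lambda>(q, g). (g, \<lfloor>of_nat N * q\<rfloor>)) cs"
  have tc: "fst ` set t \<subseteq> carrier G1" using assms(1) by (auto simp: t_def)
  have sgt: "sig (map (\<lambda>(g, e). (f g, e)) t) = sig (cp M s)"
  proof
    fix y
    have "map (\<lambda>(g, e). (f g, e)) t = map (\<lambda>(q, g). (f g, \<lfloor>of_nat N * q\<rfloor>)) cs"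
      by (auto simp: t_def)
    then have "(of_int (sig (map (\<lambda>(g, e). (f g, e)) t) y) :: rat) = of_nat N * fstar cs y"
      using sig_floor[OF integ] by simp
    also have "\<dots> = of_nat M * (of_nat k * fstar cs y)" by (simp add: N_def)
    also have "\<dots> = of_int (sig (cp M s) y)" using 1(4) by (simp add: sig_cp)
    finally show "sig (map (\<lambda>(g, e). (f g, e)) t) y = sig (cp M s) y" by linarith
  qed
  have "sum_list (map (\<lambda>(g, e). real_of_int e * \<phi>1 g) t) \<le> 2 * D * real (M * c + length (cp M s))"
    using dom_core[OF tc set_cp_sub[OF 1(2)] sgt expr_cp[OF 1(2,3)]] by simp
  moreover have "sum_list (map (\<lambda>(g, e). real_of_int e * \<phi>1 g) t) = real N * phat cs"
    unfolding t_def using phat_floor[OF integ] .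
  ultimately have "real M * real k * phat cs \<le> real M * (2 * D * real (c + length s))"
    by (simp add: N_def algebra_simps)
  then have "real k * phat cs \<le> 2 * D * real (c + length s)" using M by simp
  then have "phat cs \<le> 2 * D * real (c + length s) / real k" using 1(1) by (simp add: field_simps)
  then show ?thesis using 1(5) by simp
qed

lemma Gamma0_good: "hb_good Pc \<Gamma>0 \<Gamma>0"
  unfolding hb_good_def
proof (intro conjI allI impI)
  show "\<Gamma>0 \<subseteq> \<Gamma>0" by simp
next
  fix a x b y assume "(a, x) \<in> \<Gamma>0" "(b, y) \<in> \<Gamma>0"
  then obtain cs1 cs2 where "a = fstar cs1" "x = phat cs1" "snd ` set cs1 \<subseteq> carrier G1"
    "b = fstar cs2" "y = phat cs2" "snd ` set cs2 \<subseteq> carrier G1" unfolding \<Gamma>0_def by blast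
  moreover have "vadd (fstar cs1) (fstar cs2) = fstar (cs1 @ cs2)"
    by (auto simp: vadd_def fstar_def)
  moreover have "phat cs1 + phat cs2 = phat (cs1 @ cs2)" by (simp add: phat_def)
  moreover have "snd ` set (cs1 @ cs2) \<subseteq> carrier G1" using calculation by auto
  ultimately show "(vadd a b, x + y) \<in> \<Gamma>0" unfolding \<Gamma>0_def by blast
next
  fix a x q assume "(a, x) \<in> \<Gamma>0"
  then obtain cs where cs: "a = fstar cs" "x = phat cs" "snd ` set cs \<subseteq> carrier G1" unfolding \<Gamma>0_def by blast
  define cs' where "cs' = map (\<lambda>(q', g). (q * q', g)) cs"
  have "vsc q (fstar cs) y = fstar cs' y" for y
    unfolding vsc_def fstar_def cs'_def by (induction cs) (auto simp: algebra_simps)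
  then have "vsc q (fstar cs) = fstar cs'" by blast
  moreover have "of_rat q * phat cs = phat cs'"
    unfolding phat_def cs'_def by (induction cs) (auto simp: algebra_simps of_rat_mult)
  moreover have "snd ` set cs' \<subseteq> carrier G1" using cs by (auto simp: cs'_def)
  ultimately show "(vsc q a, of_rat q * x) \<in> \<Gamma>0" unfolding \<Gamma>0_def using cs by auto
next
  fix a x s assume "(a, x) \<in> \<Gamma>0" "Pc a s"
  then show "x \<le> s" unfolding \<Gamma>0_def using Gamma0_dom by blast
qed

lemma Z0: "((\<lambda>_. 0), 0) \<in> \<Gamma>0"
proof -
  have "fstar [] = (\<lambda>_. 0)" "phat [] = 0" by (auto simp: fstar_def phat_def)
  then show ?thesis unfolding \<Gamma>0_def by force
qed

lemma exists_Phi: "\<exists>\<Phi>. (\<forall>a b. \<Phi> (vadd a b) = \<Phi> a + \<Phi> b) \<and> (\<forall>q a. \<Phi> (vsc q a) = of_rat q * \<Phi> a)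
            \<and> (\<forall>a x. (a,x) \<in> \<Gamma>0 \<longrightarrow> \<Phi> a = x) \<and> (\<forall>a r. Pc a r \<longrightarrow> \<Phi> a \<le> r)"
  by (rule hahn_banach_rel[OF Pc_add Pc_sc Pc_sym Pc0 Gamma0_good Z0])

end

definition dlt :: "'c \<Rightarrow> 'c \<Rightarrow> rat" where "dlt g = (\<lambda>y. if y = g then 1 else 0)"

lemma le_of_forall_div: assumes "\<And>k::nat. k \<ge> 1 \<Longrightarrow> x \<le> a + C / real k" shows "x \<le> (a::real)"
proof (rule ccontr)
  assume "\<not> x \<le> a"
  then have xa: "x - a > 0" by simp
  obtain k :: nat where k: "\<bar>C\<bar> / (x - a) < real k" using reals_Archimedean2 by blast
  then have k1: "k \<ge> 1" using xa by (cases k) (auto simp: divide_less_0_iff)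
  have "\<bar>C\<bar> < real k * (x - a)" using k xa by (simp add: field_simps)
  then have "C / real k < x - a" using k1 by (simp add: field_simps)
  then show False using assms[OF k1] by simp
qed

context iso_setup
begin

lemma cert_hom:
  assumes g: "g \<in> carrier G2" and k: "k \<ge> (1::nat)"
  shows "Pc (vadd (dlt (g [^]\<^bsub>G2\<^esub> n)) (vsc (- of_int n) (dlt g))) (0 + 4 * D / real k)"
    and "Pc (vsc (-1) (vadd (dlt (g [^]\<^bsub>G2\<^esub> n)) (vsc (- of_int n) (dlt g)))) (0 + 4 * D / real k)"
proof -
  have gn: "g [^]\<^bsub>G2\<^esub> n \<in> carrier G2" using g by simp
  show "Pc (vadd (dlt (g [^]\<^bsub>G2\<^esub> n)) (vsc (- of_int n) (dlt g))) (0 + 4 * D / real k)"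
  proof (rule PcI[of k "[(g [^]\<^bsub>G2\<^esub> n, int k), (g, - n * int k)]" 0])
    show "0 < k" using k by simp
    show "fst ` set [(g [^]\<^bsub>G2\<^esub> n, int k), (g, - n * int k)] \<subseteq> carrier G2" using g gn by auto
    have "prodl G2 (rz G2 1 [(g [^]\<^bsub>G2\<^esub> n, int k), (g, - n * int k)]) = \<one>\<^bsub>G2\<^esub>"
      using g by (simp add: G2.int_pow_pow G2.int_pow_mult[symmetric])
    then have p: "prodl G2 (rz G2 1 [(g [^]\<^bsub>G2\<^esub> n, int k), (g, - n * int k)]) \<in> CM G2 0" by (simp add: G2.CM_0)
    have c: "fst ` set [(g [^]\<^bsub>G2\<^esub> n, int k), (g, - n * int k)] \<subseteq> carrier G2" using g gn by auto
    show "expr G2 (rz G2 1 [(g [^]\<^bsub>G2\<^esub> n, int k), (g, - n * int k)]) 0"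
      by (rule G2.expr_prod[OF G2.rz_closed[OF c] p])
  next
    fix y
    show "of_nat k * vadd (dlt (g [^]\<^bsub>G2\<^esub> n)) (vsc (- of_int n) (dlt g)) y =
      of_int (sig [(g [^]\<^bsub>G2\<^esub> n, int k), (g, - n * int k)] y)"
      by (simp add: vadd_def vsc_def dlt_def algebra_simps)
  next
    show "2 * D * real (0 + length [(g [^]\<^bsub>G2\<^esub> n, int k), (g, - n * int k)]) / real k \<le> 0 + 4 * D / real k"
      by simp
  qed
  show "Pc (vsc (-1) (vadd (dlt (g [^]\<^bsub>G2\<^esub> n)) (vsc (- of_int n) (dlt g)))) (0 + 4 * D / real k)"
  proof (rule PcI[of k "[(g, n * int k), (g [^]\<^bsub>G2\<^esub> n, - int k)]" 0])
    show "0 < k" using k by simp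
    show "fst ` set [(g, n * int k), (g [^]\<^bsub>G2\<^esub> n, - int k)] \<subseteq> carrier G2" using g gn by auto
    have "prodl G2 (rz G2 1 [(g, n * int k), (g [^]\<^bsub>G2\<^esub> n, - int k)]) = \<one>\<^bsub>G2\<^esub>"
      using g by (simp add: G2.int_pow_pow G2.int_pow_mult[symmetric])
    then have p: "prodl G2 (rz G2 1 [(g, n * int k), (g [^]\<^bsub>G2\<^esub> n, - int k)]) \<in> CM G2 0" by (simp add: G2.CM_0)
    have c: "fst ` set [(g, n * int k), (g [^]\<^bsub>G2\<^esub> n, - int k)] \<subseteq> carrier G2" using g gn by auto
    show "expr G2 (rz G2 1 [(g, n * int k), (g [^]\<^bsub>G2\<^esub> n, - int k)]) 0"
      by (rule G2.expr_prod[OF G2.rz_closed[OF c] p])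
  next
    fix y
    show "of_nat k * vsc (-1) (vadd (dlt (g [^]\<^bsub>G2\<^esub> n)) (vsc (- of_int n) (dlt g))) y =
      of_int (sig [(g, n * int k), (g [^]\<^bsub>G2\<^esub> n, - int k)] y)"
      by (simp add: vadd_def vsc_def dlt_def algebra_simps)
  next
    show "2 * D * real (0 + length [(g, n * int k), (g [^]\<^bsub>G2\<^esub> n, - int k)]) / real k \<le> 0 + 4 * D / real k"
      by simp
  qed
qed

lemma cert_def_bound: "2 * D * real (k div 2 + 3) / real k \<le> D + 6 * D / real k" if k: "k \<ge> (1::nat)"
proof -
  have "2 * real (k div 2) \<le> real k" by linarith
  then have "2 * D * real (k div 2) \<le> D * real k" using D0 by (metis mult.assoc mult.commute mult_left_mono)
  then have "2 * D * real (k div 2 + 3) \<le> D * real k + 6 * D" by (simp add: algebra_simps)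
  then show ?thesis using k by (simp add: field_simps)
qed

lemma cert_defect:
  assumes g: "g \<in> carrier G2" and h: "h \<in> carrier G2" and k: "k \<ge> (1::nat)"
  shows "Pc (vadd (vadd (dlt g) (dlt h)) (vsc (-1) (dlt (g \<otimes>\<^bsub>G2\<^esub> h)))) (D + 6 * D / real k)"
    and "Pc (vsc (-1) (vadd (vadd (dlt g) (dlt h)) (vsc (-1) (dlt (g \<otimes>\<^bsub>G2\<^esub> h))))) (D + 6 * D / real k)"
proof -
  have gh: "g \<otimes>\<^bsub>G2\<^esub> h \<in> carrier G2" using g h by simp
  show "Pc (vadd (vadd (dlt g) (dlt h)) (vsc (-1) (dlt (g \<otimes>\<^bsub>G2\<^esub> h)))) (D + 6 * D / real k)"
  proof (rule PcI[of k "[(g, int k), (h, int k), (g \<otimes>\<^bsub>G2\<^esub> h, - int k)]" "k div 2"])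
    show "0 < k" using k by simp
    show "fst ` set [(g, int k), (h, int k), (g \<otimes>\<^bsub>G2\<^esub> h, - int k)] \<subseteq> carrier G2" using g h gh by auto
    have "rz G2 1 [(g, int k), (h, int k), (g \<otimes>\<^bsub>G2\<^esub> h, - int k)] =
       [g [^]\<^bsub>G2\<^esub> k, h [^]\<^bsub>G2\<^esub> k, inv\<^bsub>G2\<^esub> ((g \<otimes>\<^bsub>G2\<^esub> h) [^]\<^bsub>G2\<^esub> k)]"
      using g h gh by (simp add: int_pow_int G2.int_pow_neg_int)
    then show "expr G2 (rz G2 1 [(g, int k), (h, int k), (g \<otimes>\<^bsub>G2\<^esub> h, - int k)]) (k div 2)"
      using G2.expr_pants[OF g h] by simp
  next
    fix y
    show "of_nat k * vadd (vadd (dlt g) (dlt h)) (vsc (-1) (dlt (g \<otimes>\<^bsub>G2\<^esub> h))) y =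
      of_int (sig [(g, int k), (h, int k), (g \<otimes>\<^bsub>G2\<^esub> h, - int k)] y)"
      by (simp add: vadd_def vsc_def dlt_def algebra_simps)
  next
    show "2 * D * real (k div 2 + length [(g, int k), (h, int k), (g \<otimes>\<^bsub>G2\<^esub> h, - int k)]) / real k
       \<le> D + 6 * D / real k" using cert_def_bound[OF k] by (simp add: add.commute)
  qed
  show "Pc (vsc (-1) (vadd (vadd (dlt g) (dlt h)) (vsc (-1) (dlt (g \<otimes>\<^bsub>G2\<^esub> h))))) (D + 6 * D / real k)"
  proof (rule PcI[of k "[(g \<otimes>\<^bsub>G2\<^esub> h, int k), (h, - int k), (g, - int k)]" "k div 2"])
    show "0 < k" using k by simp
    show "fst ` set [(g \<otimes>\<^bsub>G2\<^esub> h, int k), (h, - int k), (g, - int k)] \<subseteq> carrier G2" using g h gh by auto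
    have "rz G2 1 [(g \<otimes>\<^bsub>G2\<^esub> h, int k), (h, - int k), (g, - int k)] =
       [(g \<otimes>\<^bsub>G2\<^esub> h) [^]\<^bsub>G2\<^esub> k, inv\<^bsub>G2\<^esub> (h [^]\<^bsub>G2\<^esub> k), inv\<^bsub>G2\<^esub> (g [^]\<^bsub>G2\<^esub> k)]"
      using g h gh by (simp add: int_pow_int G2.int_pow_neg_int)
    then show "expr G2 (rz G2 1 [(g \<otimes>\<^bsub>G2\<^esub> h, int k), (h, - int k), (g, - int k)]) (k div 2)"
      using G2.expr_pants_inv[OF g h] by simp
  next
    fix y
    show "of_nat k * vsc (-1) (vadd (vadd (dlt g) (dlt h)) (vsc (-1) (dlt (g \<otimes>\<^bsub>G2\<^esub> h)))) y =
      of_int (sig [(g \<otimes>\<^bsub>G2\<^esub> h, int k), (h, - int k), (g, - int k)] y)"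
      by (simp add: vadd_def vsc_def dlt_def algebra_simps)
  next
    show "2 * D * real (k div 2 + length [(g \<otimes>\<^bsub>G2\<^esub> h, int k), (h, - int k), (g, - int k)]) / real k
       \<le> D + 6 * D / real k" using cert_def_bound[OF k] by (simp add: add.commute)
  qed
qed

lemma extension_exists:
  "\<exists>\<phi>2 \<in> Qm G2. defect G2 \<phi>2 = defect G1 \<phi>1 \<and> (\<forall>g \<in> carrier G1. \<phi>2 (f g) = \<phi>1 g)"
proof -
  obtain \<Phi> where Padd: "\<And>a b. \<Phi> (vadd a b) = \<Phi> a + \<Phi> b"
    and Psc: "\<And>q a. \<Phi> (vsc q a) = of_rat q * \<Phi> a"
    and PG: "\<And>a x. (a,x) \<in> \<Gamma>0 \<Longrightarrow> \<Phi> a = x"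
    and Pdom: "\<And>a r. Pc a r \<Longrightarrow> \<Phi> a \<le> r"
    using exists_Phi by blast
  define \<phi>2 where "\<phi>2 g = \<Phi> (dlt g)" for g
  have ext: "\<phi>2 (f g) = \<phi>1 g" if g: "g \<in> carrier G1" for g
  proof -
    have "(fstar [(1, g)], phat [(1, g)]) \<in> \<Gamma>0" using g unfolding \<Gamma>0_def by auto
    moreover have "fstar [(1, g)] = dlt (f g)" by (auto simp: fstar_def dlt_def)
    moreover have "phat [(1, g)] = \<phi>1 g" by (simp add: phat_def)
    ultimately show ?thesis using PG by (simp add: \<phi>2_def)
  qed
  have hom2: "homogeneous G2 \<phi>2"
    unfolding homogeneous_def
  proof (intro ballI allI)
    fix g n assume g: "g \<in> carrier G2"
    define v where "v = vadd (dlt (g [^]\<^bsub>G2\<^esub> n)) (vsc (- of_int n) (dlt g))"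
    have "\<Phi> v \<le> 0" using le_of_forall_div[of "\<Phi> v" 0 "4 * D"] Pdom cert_hom(1)[OF g] by (simp add: v_def)
    moreover have "\<Phi> (vsc (-1) v) \<le> 0"
      using le_of_forall_div[of "\<Phi> (vsc (-1) v)" 0 "4 * D"] Pdom cert_hom(2)[OF g] by (simp add: v_def)
    ultimately have "\<Phi> v = 0" using Psc[of "-1" v] by simp
    moreover have "real_of_rat (- rat_of_int n) = - real_of_int n" by (simp add: of_rat_minus)
    ultimately show "\<phi>2 (g [^]\<^bsub>G2\<^esub> n) = of_int n * \<phi>2 g"
      unfolding v_def \<phi>2_def Padd Psc by simp
  qed
  have dbound: "\<bar>\<phi>2 g + \<phi>2 h - \<phi>2 (g \<otimes>\<^bsub>G2\<^esub> h)\<bar> \<le> D" if g: "g \<in> carrier G2" and h: "h \<in> carrier G2" for g h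
  proof -
    define v where "v = vadd (vadd (dlt g) (dlt h)) (vsc (-1) (dlt (g \<otimes>\<^bsub>G2\<^esub> h)))"
    have "\<Phi> v \<le> D" using le_of_forall_div[of "\<Phi> v" D "6 * D"] Pdom cert_defect(1)[OF g h] by (simp add: v_def)
    moreover have "\<Phi> (vsc (-1) v) \<le> D"
      using le_of_forall_div[of "\<Phi> (vsc (-1) v)" D "6 * D"] Pdom cert_defect(2)[OF g h] by (simp add: v_def)
    moreover have "\<Phi> v = \<phi>2 g + \<phi>2 h - \<phi>2 (g \<otimes>\<^bsub>G2\<^esub> h)"
      unfolding v_def \<phi>2_def Padd Psc by simp
    ultimately show ?thesis using Psc[of "-1" v] by (simp add: abs_le_iff)
  qed
  have bdd: "bdd_above (defect_set G2 \<phi>2)"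
    unfolding defect_set_def bdd_above_def using dbound by blast
  have qm2: "quasimorphism G2 \<phi>2" unfolding quasimorphism_def using bdd .
  have ne1: "defect_set G1 \<phi>1 \<noteq> {}" unfolding defect_set_def by blast
  have ne2: "defect_set G2 \<phi>2 \<noteq> {}" unfolding defect_set_def by blast
  have le: "defect G2 \<phi>2 \<le> D"
    unfolding defect_def[of G2 \<phi>2] by (rule cSup_least[OF ne2]) (use dbound in \<open>auto simp: defect_set_def\<close>)
  have sub: "defect_set G1 \<phi>1 \<subseteq> defect_set G2 \<phi>2"
  proof
    fix x assume "x \<in> defect_set G1 \<phi>1"
    then obtain g h where gh: "x = \<bar>\<phi>1 g + \<phi>1 h - \<phi>1 (g \<otimes>\<^bsub>G1\<^esub> h)\<bar>" "g \<in> carrier G1" "h \<in> carrier G1"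
      unfolding defect_set_def by blast
    then have "x = \<bar>\<phi>2 (f g) + \<phi>2 (f h) - \<phi>2 (f g \<otimes>\<^bsub>G2\<^esub> f h)\<bar>"
      using ext[of g] ext[of h] ext[of "g \<otimes>\<^bsub>G1\<^esub> h"] f_mult[of g h] gh(2,3) by simp
    then show "x \<in> defect_set G2 \<phi>2" unfolding defect_set_def using gh f_closed by blast
  qed
  have ge: "D \<le> defect G2 \<phi>2" unfolding defect_def using cSup_subset_mono[OF ne1 bdd sub] .
  show ?thesis using qm2 hom2 le ge ext unfolding Qm_def by (intro bexI[of _ \<phi>2]) auto
qed

end

theorem corollary2p4:
  fixes G1 :: "('a, 'b) monoid_scheme" and G2 :: "('c, 'd) monoid_scheme"
    and f :: "'a \<Rightarrow> 'c"
  assumes "group G1" and "group G2" and "f \<in> hom G1 G2"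
    and "scl_isometric G1 G2 f"
  shows "(\<forall>\<phi>1 \<in> Qm G1. \<exists>\<phi>2 \<in> Qm G2.
            defect G2 \<phi>2 = defect G1 \<phi>1 \<and> (\<forall>g \<in> carrier G1. \<phi>2 (f g) = \<phi>1 g))
       \<and> (\<forall>\<phi>2 \<in> Qm G2. \<phi>2 \<circ> f \<in> Qm G1)
       \<and> (\<forall>\<psi> \<in> Homr G2. \<psi> \<circ> f \<in> Homr G1)
       \<and> (\<forall>\<phi>1 \<in> Qm G1. \<exists>\<phi>2 \<in> Qm G2. (\<lambda>g. \<phi>1 g - \<phi>2 (f g)) \<in> Homr G1)"
proof -
  have fc: "\<And>g. g \<in> carrier G1 \<Longrightarrow> f g \<in> carrier G2" using assms(3) by (auto simp: hom_def)
  have fm: "\<And>g h. g \<in> carrier G1 \<Longrightarrow> h \<in> carrier G1 \<Longrightarrow> f (g \<otimes>\<^bsub>G1\<^esub> h) = f g \<otimes>\<^bsub>G2\<^esub> f h"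
    using assms(3) by (auto simp: hom_def)
  have P1: "\<forall>\<phi>1 \<in> Qm G1. \<exists>\<phi>2 \<in> Qm G2.
            defect G2 \<phi>2 = defect G1 \<phi>1 \<and> (\<forall>g \<in> carrier G1. \<phi>2 (f g) = \<phi>1 g)"
  proof
    fix \<phi>1 assume "\<phi>1 \<in> Qm G1"
    then have q: "quasimorphism G1 \<phi>1" "homogeneous G1 \<phi>1" by (auto simp: Qm_def)
    interpret iso_setup G1 G2 f \<phi>1
      by (rule iso_setup.intro[OF assms(1,2)]) (use assms q in \<open>unfold_locales\<close>)
    show "\<exists>\<phi>2 \<in> Qm G2. defect G2 \<phi>2 = defect G1 \<phi>1 \<and> (\<forall>g \<in> carrier G1. \<phi>2 (f g) = \<phi>1 g)"
      by (rule extension_exists)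
  qed
  have P2: "\<forall>\<phi>2 \<in> Qm G2. \<phi>2 \<circ> f \<in> Qm G1"
  proof
    fix \<phi>2 assume "\<phi>2 \<in> Qm G2"
    then have q: "quasimorphism G2 \<phi>2" "homogeneous G2 \<phi>2" by (auto simp: Qm_def)
    have "homogeneous G1 (\<phi>2 \<circ> f)"
      unfolding homogeneous_def
    proof (intro ballI allI)
      fix g and n :: int assume g: "g \<in> carrier G1"
      have "f (g [^]\<^bsub>G1\<^esub> n) = f g [^]\<^bsub>G2\<^esub> n" using hom_int_pow[OF assms(3) g assms(1,2)] .
      then show "(\<phi>2 \<circ> f) (g [^]\<^bsub>G1\<^esub> n) = of_int n * (\<phi>2 \<circ> f) g"
        using q(2) fc[OF g] unfolding homogeneous_def by simp
    qed
    moreover have "quasimorphism G1 (\<phi>2 \<circ> f)"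
    proof -
      have "defect_set G1 (\<phi>2 \<circ> f) \<subseteq> defect_set G2 \<phi>2"
      proof
        fix x assume "x \<in> defect_set G1 (\<phi>2 \<circ> f)"
        then obtain g h where gh: "x = \<bar>(\<phi>2 \<circ> f) g + (\<phi>2 \<circ> f) h - (\<phi>2 \<circ> f) (g \<otimes>\<^bsub>G1\<^esub> h)\<bar>"
          "g \<in> carrier G1" "h \<in> carrier G1" unfolding defect_set_def by blast
        then have "x = \<bar>\<phi>2 (f g) + \<phi>2 (f h) - \<phi>2 (f g \<otimes>\<^bsub>G2\<^esub> f h)\<bar>" using fm by simp
        then show "x \<in> defect_set G2 \<phi>2" unfolding defect_set_def using gh fc by blast
      qed
      then show ?thesis using q(1) unfolding quasimorphism_def by (rule bdd_above_mono[rotated])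
    qed
    ultimately show "\<phi>2 \<circ> f \<in> Qm G1" by (simp add: Qm_def)
  qed
  have P3: "\<forall>\<psi> \<in> Homr G2. \<psi> \<circ> f \<in> Homr G1"
    using fc fm by (auto simp: Homr_def)
  have P4: "\<forall>\<phi>1 \<in> Qm G1. \<exists>\<phi>2 \<in> Qm G2. (\<lambda>g. \<phi>1 g - \<phi>2 (f g)) \<in> Homr G1"
  proof
    fix \<phi>1 assume "\<phi>1 \<in> Qm G1"
    then obtain \<phi>2 where "\<phi>2 \<in> Qm G2" "\<forall>g \<in> carrier G1. \<phi>2 (f g) = \<phi>1 g" using P1 by blast
    then show "\<exists>\<phi>2 \<in> Qm G2. (\<lambda>g. \<phi>1 g - \<phi>2 (f g)) \<in> Homr G1"
      using monoid.m_closed[OF group.is_monoid[OF assms(1)]] by (intro bexI[of _ \<phi>2]) (auto simp: Homr_def)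
  qed
  show ?thesis using P1 P2 P3 P4 by blast
qed

end
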